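(* Let $A$ be a factorizable ribbon Hopf algebra with ribbon element $v$. Then for all $a\in A$, $\underline{S}^2(a)=S(v_{(1)})\,a\,v_{(2)}$, i.e. $\underline S^2$ is the right adjoint action of $v$.
   Context: Let $K$ be a field and $A$ a finite-dimensional Hopf algebra over $K$ with coproduct $\Delta(a)=a_{(1)}\otimes a_{(2)}$, counit $\varepsilon$ and bijective antipode $S$. $A$ is quasitriangular with R-matrix $R=R_1\otimes R_2$ ($R'$ a second copy): $R$ invertible, $\Delta^{\mathrm{cop}}(a)=R\Delta(a)R^{-1}$, $(\Delta\otimes\mathrm{id})(R)=R_{13}R_{23}$, $(\mathrm{id}\otimes\Delta)(R)=R_{13}R_{12}$. Monodromy matrix $Q=\tau(R)R=R_2R'_1\otimes R_1R'_2=Q_1\otimes Q_2$. Drinfel'd element $u=S(R_2)R_1$. A ribbon element (convention of this paper) is a central invertible $v\in A$ with $S(v)=v$, $\varepsilon(v)=1$, $v^2=(uS(u))^{-1}$ and $\Delta(v)=(v\otimes v)Q$. $A$ is factorizable if $A^*\to A$, $\varphi\mapsto\varphi(Q_1)Q_2$ is bijective. The transmutation antipode is $\underline{S}(a)=S\big(S(R_{1(1)})aR_{1(2)}\big)R_2$, equivalently $\underline{S}(a)=R_1S(a)S(R_2)S(u^{-1})$. *)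

theory Defs
  imports Main
begin

text \<open>A finite-dimensional Hopf algebra over a field 'k is encoded by structure
constants with respect to a fixed basis indexed by the finite type 'i.
Elements of A are coordinate vectors 'i => 'k, elements of A (x) A are
'i => 'i => 'k, elements of A (x) A (x) A are 'i => 'i => 'i => 'k.
The dual space A* is identified with 'i => 'k via values on the basis.\<close>

record ('k, 'i) hopf =
  mu     :: "'i \<Rightarrow> 'i \<Rightarrow> 'i \<Rightarrow> 'k"   (* e_i e_j = sum_k mu i j k e_k *)
  unit   :: "'i \<Rightarrow> 'k"
  delta  :: "'i \<Rightarrow> 'i \<Rightarrow> 'i \<Rightarrow> 'k"   (* Delta e_k = sum_{i,j} delta k i j e_i (x) e_j *)
  counit :: "'i \<Rightarrow> 'k"
  antip  :: "'i \<Rightarrow> 'i \<Rightarrow> 'k"             (* S e_i = sum_j antip i j e_j *)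

definition bvec :: "'i \<Rightarrow> 'i \<Rightarrow> 'k::field" where
  "bvec i = (\<lambda>j. if j = i then 1 else 0)"

definition vmul :: "('k::field, 'i::finite) hopf \<Rightarrow> ('i \<Rightarrow> 'k) \<Rightarrow> ('i \<Rightarrow> 'k) \<Rightarrow> ('i \<Rightarrow> 'k)" where
  "vmul H x y = (\<lambda>k. \<Sum>i\<in>UNIV. \<Sum>j\<in>UNIV. x i * y j * mu H i j k)"

definition vone :: "('k::field, 'i::finite) hopf \<Rightarrow> 'i \<Rightarrow> 'k" where
  "vone H = unit H"

definition vDelta :: "('k::field, 'i::finite) hopf \<Rightarrow> ('i \<Rightarrow> 'k) \<Rightarrow> ('i \<Rightarrow> 'i \<Rightarrow> 'k)" where
  "vDelta H x = (\<lambda>i j. \<Sum>k\<in>UNIV. x k * delta H k i j)"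

definition veps :: "('k::field, 'i::finite) hopf \<Rightarrow> ('i \<Rightarrow> 'k) \<Rightarrow> 'k" where
  "veps H x = (\<Sum>i\<in>UNIV. x i * counit H i)"

definition vS :: "('k::field, 'i::finite) hopf \<Rightarrow> ('i \<Rightarrow> 'k) \<Rightarrow> ('i \<Rightarrow> 'k)" where
  "vS H x = (\<lambda>j. \<Sum>i\<in>UNIV. x i * antip H i j)"

definition tens :: "('i \<Rightarrow> 'k::field) \<Rightarrow> ('i \<Rightarrow> 'k) \<Rightarrow> ('i \<Rightarrow> 'i \<Rightarrow> 'k)" where
  "tens x y = (\<lambda>i j. x i * y j)"

definition tau :: "('i \<Rightarrow> 'i \<Rightarrow> 'k) \<Rightarrow> ('i \<Rightarrow> 'i \<Rightarrow> 'k)" where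
  "tau X = (\<lambda>i j. X j i)"

definition tmul :: "('k::field, 'i::finite) hopf \<Rightarrow> ('i \<Rightarrow> 'i \<Rightarrow> 'k) \<Rightarrow> ('i \<Rightarrow> 'i \<Rightarrow> 'k) \<Rightarrow> ('i \<Rightarrow> 'i \<Rightarrow> 'k)" where
  "tmul H X Y = (\<lambda>k l. \<Sum>i\<in>UNIV. \<Sum>j\<in>UNIV. \<Sum>i'\<in>UNIV. \<Sum>j'\<in>UNIV.
      X i j * Y i' j' * mu H i i' k * mu H j j' l)"

definition tone :: "('k::field, 'i::finite) hopf \<Rightarrow> 'i \<Rightarrow> 'i \<Rightarrow> 'k" where
  "tone H = tens (vone H) (vone H)"

definition t3mul :: "('k::field, 'i::finite) hopf \<Rightarrow> ('i \<Rightarrow> 'i \<Rightarrow> 'i \<Rightarrow> 'k) \<Rightarrow> ('i \<Rightarrow> 'i \<Rightarrow> 'i \<Rightarrow> 'k)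
    \<Rightarrow> ('i \<Rightarrow> 'i \<Rightarrow> 'i \<Rightarrow> 'k)" where
  "t3mul H X Y = (\<lambda>k l m. \<Sum>i\<in>UNIV. \<Sum>j\<in>UNIV. \<Sum>p\<in>UNIV. \<Sum>i'\<in>UNIV. \<Sum>j'\<in>UNIV. \<Sum>p'\<in>UNIV.
      X i j p * Y i' j' p' * mu H i i' k * mu H j j' l * mu H p p' m)"

definition Delta_id :: "('k::field, 'i::finite) hopf \<Rightarrow> ('i \<Rightarrow> 'i \<Rightarrow> 'k) \<Rightarrow> ('i \<Rightarrow> 'i \<Rightarrow> 'i \<Rightarrow> 'k)" where
  "Delta_id H X = (\<lambda>a b c. \<Sum>k\<in>UNIV. X k c * delta H k a b)"

definition id_Delta :: "('k::field, 'i::finite) hopf \<Rightarrow> ('i \<Rightarrow> 'i \<Rightarrow> 'k) \<Rightarrow> ('i \<Rightarrow> 'i \<Rightarrow> 'i \<Rightarrow> 'k)" where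
  "id_Delta H X = (\<lambda>a b c. \<Sum>k\<in>UNIV. X a k * delta H k b c)"

text \<open>Apply a bilinear map f : A x A -> A to a tensor X in A (x) A, i.e. the linear
map A (x) A -> A induced by f.  With Sweedler-type notation X = X_1 (x) X_2 this is f(X_1, X_2).\<close>

definition bilin_apply :: "(('i \<Rightarrow> 'k::field) \<Rightarrow> ('i \<Rightarrow> 'k) \<Rightarrow> ('i \<Rightarrow> 'k)) \<Rightarrow> ('i::finite \<Rightarrow> 'i \<Rightarrow> 'k) \<Rightarrow> ('i \<Rightarrow> 'k)" where
  "bilin_apply f X = (\<lambda>k. \<Sum>i\<in>UNIV. \<Sum>j\<in>UNIV. X i j * f (bvec i) (bvec j) k)"

definition is_hopf :: "('k::field, 'i::finite) hopf \<Rightarrow> bool" where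
  "is_hopf H \<longleftrightarrow>
     (\<forall>x y z. vmul H (vmul H x y) z = vmul H x (vmul H y z)) \<and>
     (\<forall>x. vmul H (vone H) x = x \<and> vmul H x (vone H) = x) \<and>
     (\<forall>x. Delta_id H (vDelta H x) = id_Delta H (vDelta H x)) \<and>
     (\<forall>x. (\<lambda>j. \<Sum>i\<in>UNIV. counit H i * vDelta H x i j) = x) \<and>
     (\<forall>x. (\<lambda>i. \<Sum>j\<in>UNIV. vDelta H x i j * counit H j) = x) \<and>
     (\<forall>x y. vDelta H (vmul H x y) = tmul H (vDelta H x) (vDelta H y)) \<and>
     vDelta H (vone H) = tone H \<and>
     (\<forall>x y. veps H (vmul H x y) = veps H x * veps H y) \<and>
     veps H (vone H) = 1 \<and>
     (\<forall>x. bilin_apply (\<lambda>p q. vmul H (vS H p) q) (vDelta H x) = (\<lambda>k. veps H x * vone H k)) \<and>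
     (\<forall>x. bilin_apply (\<lambda>p q. vmul H p (vS H q)) (vDelta H x) = (\<lambda>k. veps H x * vone H k))"

definition R13 :: "('k::field, 'i::finite) hopf \<Rightarrow> ('i \<Rightarrow> 'i \<Rightarrow> 'k) \<Rightarrow> ('i \<Rightarrow> 'i \<Rightarrow> 'i \<Rightarrow> 'k)" where
  "R13 H R = (\<lambda>a b c. R a c * vone H b)"
definition R23 :: "('k::field, 'i::finite) hopf \<Rightarrow> ('i \<Rightarrow> 'i \<Rightarrow> 'k) \<Rightarrow> ('i \<Rightarrow> 'i \<Rightarrow> 'i \<Rightarrow> 'k)" where
  "R23 H R = (\<lambda>a b c. vone H a * R b c)"
definition R12 :: "('k::field, 'i::finite) hopf \<Rightarrow> ('i \<Rightarrow> 'i \<Rightarrow> 'k) \<Rightarrow> ('i \<Rightarrow> 'i \<Rightarrow> 'i \<Rightarrow> 'k)" where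
  "R12 H R = (\<lambda>a b c. R a b * vone H c)"

definition quasitriangular :: "('k::field, 'i::finite) hopf \<Rightarrow> ('i \<Rightarrow> 'i \<Rightarrow> 'k) \<Rightarrow> bool" where
  "quasitriangular H R \<longleftrightarrow>
     (\<exists>Rinv. tmul H R Rinv = tone H \<and> tmul H Rinv R = tone H \<and>
        (\<forall>a. tau (vDelta H a) = tmul H (tmul H R (vDelta H a)) Rinv)) \<and>
     Delta_id H R = t3mul H (R13 H R) (R23 H R) \<and>
     id_Delta H R = t3mul H (R13 H R) (R12 H R)"

definition monodromy :: "('k::field, 'i::finite) hopf \<Rightarrow> ('i \<Rightarrow> 'i \<Rightarrow> 'k) \<Rightarrow> ('i \<Rightarrow> 'i \<Rightarrow> 'k)" where
  "monodromy H R = tmul H (tau R) R"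

definition drinfeld :: "('k::field, 'i::finite) hopf \<Rightarrow> ('i \<Rightarrow> 'i \<Rightarrow> 'k) \<Rightarrow> ('i \<Rightarrow> 'k)" where
  "drinfeld H R = bilin_apply (\<lambda>p q. vmul H (vS H q) p) R"

definition ribbon :: "('k::field, 'i::finite) hopf \<Rightarrow> ('i \<Rightarrow> 'i \<Rightarrow> 'k) \<Rightarrow> ('i \<Rightarrow> 'k) \<Rightarrow> bool" where
  "ribbon H R v \<longleftrightarrow>
     (\<forall>a. vmul H v a = vmul H a v) \<and>
     (\<exists>w. vmul H v w = vone H \<and> vmul H w v = vone H) \<and>
     vS H v = v \<and> veps H v = 1 \<and>
     (let w = vmul H (drinfeld H R) (vS H (drinfeld H R)) in
        vmul H (vmul H v v) w = vone H \<and> vmul H w (vmul H v v) = vone H) \<and>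
     vDelta H v = tmul H (tens v v) (monodromy H R)"

definition factorizable :: "('k::field, 'i::finite) hopf \<Rightarrow> ('i \<Rightarrow> 'i \<Rightarrow> 'k) \<Rightarrow> bool" where
  "factorizable H R \<longleftrightarrow> bij (\<lambda>\<phi>::'i \<Rightarrow> 'k. \<lambda>j. \<Sum>i\<in>UNIV. monodromy H R i j * \<phi> i)"

text \<open>Transmutation antipode  S_(a) = S(S(R_{1(1)}) a R_{1(2)}) R_2.\<close>

definition tS :: "('k::field, 'i::finite) hopf \<Rightarrow> ('i \<Rightarrow> 'i \<Rightarrow> 'k) \<Rightarrow> ('i \<Rightarrow> 'k) \<Rightarrow> ('i \<Rightarrow> 'k)" where
  "tS H R a = bilin_apply
     (\<lambda>p q. vmul H (vS H (bilin_apply (\<lambda>x y. vmul H (vmul H (vS H x) a) y) (vDelta H p))) q) R"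

end

theory Submission
  imports Defs
begin


definition lin :: "(('i::finite \<Rightarrow> 'k::field) \<Rightarrow> ('j \<Rightarrow> 'k)) \<Rightarrow> bool" where
  "lin f \<longleftrightarrow> (\<forall>x y. f (\<lambda>k. x k + y k) = (\<lambda>k. f x k + f y k)) \<and> (\<forall>c x. f (\<lambda>k. c * x k) = (\<lambda>k. c * f x k))"

lemma lin_add: "lin f \<Longrightarrow> f (\<lambda>k. x k + y k) = (\<lambda>k. f x k + f y k)"
  unfolding lin_def by blast
lemma lin_scale: "lin f \<Longrightarrow> f (\<lambda>k. c * x k) = (\<lambda>k. c * f x k)"
  unfolding lin_def by blast
lemma lin_zero: "lin f \<Longrightarrow> f (\<lambda>k. 0) = (\<lambda>k. 0)"
  using lin_scale[of f 0 "\<lambda>k. 0"] by simp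

lemma lin_sum:
  assumes "lin f" "finite A"
  shows "f (\<lambda>k. \<Sum>i\<in>A. h i k) = (\<lambda>k. \<Sum>i\<in>A. f (h i) k)"
  using assms(2)
proof induct
  case empty
  then show ?case using lin_zero[OF assms(1)] by simp
next
  case (insert a A)
  have "f (\<lambda>k. \<Sum>i\<in>insert a A. h i k) = f (\<lambda>k. h a k + (\<Sum>i\<in>A. h i k))"
    using insert by simp
  also have "\<dots> = (\<lambda>k. f (h a) k + f (\<lambda>k. \<Sum>i\<in>A. h i k) k)"
    using lin_add[OF assms(1), of "h a" "\<lambda>k. \<Sum>i\<in>A. h i k"] by simp
  finally show ?case using insert by simp
qed

lemma lin_expand:
  assumes "lin f"
  shows "f x = (\<lambda>k. \<Sum>i\<in>UNIV. x i * f (bvec i) k)"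
proof -
  have "x = (\<lambda>k. \<Sum>i\<in>UNIV. x i * bvec i k)"
  proof
    fix k
    have "(\<Sum>i\<in>UNIV. x i * bvec i k) = (\<Sum>i\<in>UNIV. if k = i then x i else 0)"
      by (rule sum.cong) (auto simp: bvec_def)
    then show "x k = (\<Sum>i\<in>UNIV. x i * bvec i k)" by simp
  qed
  then have "f x = f (\<lambda>k. \<Sum>i\<in>UNIV. x i * bvec i k)" by (rule arg_cong)
  also have "\<dots> = (\<lambda>k. \<Sum>i\<in>UNIV. f (\<lambda>k. x i * bvec i k) k)"
    by (rule lin_sum[OF assms]) simp
  also have "\<dots> = (\<lambda>k. \<Sum>i\<in>UNIV. x i * f (bvec i) k)"
    by (simp add: lin_scale[OF assms])
  finally show ?thesis .
qed

lemma linI: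
  assumes "\<And>x y. f (\<lambda>k. x k + y k) = (\<lambda>k. f x k + f y k)" "\<And>c x. f (\<lambda>k. c * x k) = (\<lambda>k. c * f x k)"
  shows "lin f" using assms unfolding lin_def by blast

lemma lin_ext:
  assumes "lin f" "lin g" "\<And>i. f (bvec i) = g (bvec i)"
  shows "f = g"
proof
  fix x show "f x = g x"
    by (subst lin_expand[OF assms(1)], subst lin_expand[OF assms(2)], simp add: assms(3))
qed

definition bilin :: "(('i::finite \<Rightarrow> 'k::field) \<Rightarrow> ('i \<Rightarrow> 'k) \<Rightarrow> ('j \<Rightarrow> 'k)) \<Rightarrow> bool" where
  "bilin F \<longleftrightarrow> (\<forall>x. lin (F x)) \<and> (\<forall>y. lin (\<lambda>x. F x y))"

lemma bilinI: "(\<And>x. lin (\<lambda>y. F x y)) \<Longrightarrow> (\<And>y. lin (\<lambda>x. F x y)) \<Longrightarrow> bilin F"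
  unfolding bilin_def by auto

lemma bilin_expand:
  assumes "bilin F"
  shows "F x y = (\<lambda>c. \<Sum>i\<in>UNIV. \<Sum>j\<in>UNIV. x i * y j * F (bvec i) (bvec j) c)"
proof -
  have l1: "lin (\<lambda>x. F x y)" for y using assms unfolding bilin_def by auto
  have l2: "lin (F x)" for x using assms unfolding bilin_def by auto
  have "F x y = (\<lambda>c. \<Sum>i\<in>UNIV. x i * F (bvec i) y c)"
    using lin_expand[OF l1[of y], of x] by simp
  also have "\<dots> = (\<lambda>c. \<Sum>i\<in>UNIV. x i * (\<Sum>j\<in>UNIV. y j * F (bvec i) (bvec j) c))"
  proof -
    have e2: "F (bvec i) y = (\<lambda>c. \<Sum>j\<in>UNIV. y j * F (bvec i) (bvec j) c)" for i
      by (rule lin_expand[OF l2])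
    show ?thesis by (simp only: e2)
  qed
  finally show ?thesis by (simp add: sum_distrib_left mult.assoc)
qed

abbreviation ba where "ba \<equiv> bilin_apply"

lemma ba_def': "ba F X = (\<lambda>k. \<Sum>i\<in>UNIV. \<Sum>j\<in>UNIV. X i j * F (bvec i) (bvec j) k)"
  by (simp add: bilin_apply_def)

lemma ba_lin_out:
  assumes "lin g"
  shows "g (ba F X) = ba (\<lambda>p q. g (F p q)) X"
proof -
  have "g (ba F X) = (\<lambda>k. \<Sum>i\<in>UNIV. g (\<lambda>k. \<Sum>j\<in>UNIV. X i j * F (bvec i) (bvec j) k) k)"
    unfolding ba_def' by (rule lin_sum[OF assms]) simp
  also have "\<dots> = (\<lambda>k. \<Sum>i\<in>UNIV. \<Sum>j\<in>UNIV. g (\<lambda>k. X i j * F (bvec i) (bvec j) k) k)"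
    by (simp add: lin_sum[OF assms])
  also have "\<dots> = ba (\<lambda>p q. g (F p q)) X"
    by (simp add: lin_scale[OF assms] ba_def')
  finally show ?thesis .
qed

lemma sum4_swap: "(\<Sum>i\<in>A. \<Sum>j\<in>B. \<Sum>k\<in>C. \<Sum>l\<in>D. f i j k l) = (\<Sum>k\<in>C. \<Sum>l\<in>D. \<Sum>i\<in>A. \<Sum>j\<in>B. f i j k l)"
proof -
  have "(\<Sum>i\<in>A. \<Sum>j\<in>B. \<Sum>k\<in>C. \<Sum>l\<in>D. f i j k l) = (\<Sum>i\<in>A. \<Sum>k\<in>C. \<Sum>j\<in>B. \<Sum>l\<in>D. f i j k l)"
    by (rule sum.cong[OF refl], rule sum.swap)
  also have "\<dots> = (\<Sum>i\<in>A. \<Sum>k\<in>C. \<Sum>l\<in>D. \<Sum>j\<in>B. f i j k l)"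
    by (rule sum.cong[OF refl], rule sum.cong[OF refl], rule sum.swap)
  also have "\<dots> = (\<Sum>k\<in>C. \<Sum>i\<in>A. \<Sum>l\<in>D. \<Sum>j\<in>B. f i j k l)"
    by (rule sum.swap)
  also have "\<dots> = (\<Sum>k\<in>C. \<Sum>l\<in>D. \<Sum>i\<in>A. \<Sum>j\<in>B. f i j k l)"
    by (rule sum.cong[OF refl], rule sum.swap)
  finally show ?thesis .
qed

lemma ba_swap:
  "ba (\<lambda>p q. ba (\<lambda>p' q'. G p q p' q') Y) X = ba (\<lambda>p' q'. ba (\<lambda>p q. G p q p' q') X) Y"
proof (rule ext)
  fix k
  have "ba (\<lambda>p q. ba (\<lambda>p' q'. G p q p' q') Y) X k = (\<Sum>i\<in>UNIV. \<Sum>j\<in>UNIV. \<Sum>i'\<in>UNIV. \<Sum>j'\<in>UNIV. X i j * Y i' j' * G (bvec i) (bvec j) (bvec i') (bvec j') k)"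
    unfolding ba_def' by (simp add: sum_distrib_left mult.assoc)
  also have "\<dots> = (\<Sum>i'\<in>UNIV. \<Sum>j'\<in>UNIV. \<Sum>i\<in>UNIV. \<Sum>j\<in>UNIV. X i j * Y i' j' * G (bvec i) (bvec j) (bvec i') (bvec j') k)"
    by (rule sum4_swap)
  also have "\<dots> = ba (\<lambda>p' q'. ba (\<lambda>p q. G p q p' q') X) Y k"
    unfolding ba_def' by (simp add: sum_distrib_left mult.assoc mult.left_commute)
  finally show "ba (\<lambda>p q. ba (\<lambda>p' q'. G p q p' q') Y) X k = ba (\<lambda>p' q'. ba (\<lambda>p q. G p q p' q') X) Y k" .
qed

lemma ba_tau: "ba F (tau X) = ba (\<lambda>p q. F q p) X"
  unfolding ba_def' tau_def by (rule ext, subst sum.swap, simp)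

lemma ba_tens:
  assumes "bilin F" shows "ba F (tens x y) = F x y"
  unfolding ba_def' tens_def bilin_expand[OF assms, of x y] by simp

lemma ba_cong: "(\<And>i j. F (bvec i) (bvec j) = G (bvec i) (bvec j)) \<Longrightarrow> ba F X = ba G X"
  unfolding ba_def' by simp

lemma lin_ba:
  assumes "\<And>i j. lin (\<lambda>x. F x (bvec i) (bvec j))"
  shows "lin (\<lambda>x. ba (F x) X)"
proof (rule linI)
  fix x y
  have a: "F (\<lambda>k. x k + y k) (bvec i) (bvec j) = (\<lambda>k. F x (bvec i) (bvec j) k + F y (bvec i) (bvec j) k)" for i j
    using lin_add[OF assms[of i j]] by simp
  show "ba (F (\<lambda>k. x k + y k)) X = (\<lambda>k. ba (F x) X k + ba (F y) X k)"
    by (rule ext) (simp add: ba_def' a sum.distrib algebra_simps)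
next
  fix c x
  have a: "F (\<lambda>k. c * x k) (bvec i) (bvec j) = (\<lambda>k. c * F x (bvec i) (bvec j) k)" for i j
    using lin_scale[OF assms[of i j]] by simp
  show "ba (F (\<lambda>k. c * x k)) X = (\<lambda>k. c * ba (F x) X k)"
    by (rule ext) (simp add: ba_def' a sum_distrib_left algebra_simps)
qed


lemma sum_bvecL: fixes k :: "'i::finite" and f :: "'i \<Rightarrow> 'k::field" shows "(\<Sum>i\<in>UNIV. bvec k i * f i) = f k"
proof -
  have "(\<Sum>i\<in>UNIV. bvec k i * f i) = (\<Sum>i\<in>UNIV. if i = k then f i else 0)"
    by (rule sum.cong) (auto simp: bvec_def)
  then show ?thesis by (simp add: sum.delta)
qed
lemma sum_bvecR: fixes k :: "'i::finite" and f :: "'i \<Rightarrow> 'k::field" shows "(\<Sum>i\<in>UNIV. f i * bvec k i) = f k"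
  using sum_bvecL[of k f] by (simp add: mult.commute)

lemma bvec_sym: "bvec i j = bvec j i" by (auto simp: bvec_def)
lemma sum_bvecL2: fixes k :: "'i::finite" and f :: "'i \<Rightarrow> 'k::field" shows "(\<Sum>i\<in>UNIV. bvec i k * f i) = f k"
  using sum_bvecL[of k f] by (simp add: bvec_sym[of k])
lemma sum_bvecR2: fixes k :: "'i::finite" and f :: "'i \<Rightarrow> 'k::field" shows "(\<Sum>i\<in>UNIV. f i * bvec i k) = f k"
  using sum_bvecR[of f k] by (simp add: bvec_sym[of k])

lemma mult_bvec1: "x * bvec i j = (if j = i then x else 0)" by (simp add: bvec_def)
lemma mult_bvec2: "bvec i j * x = (if j = i then x else 0)" by (simp add: bvec_def)
lemma mult_if0_1: "a * (if P then b else 0) = (if P then a * b else (0::'k::field))" by simp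
lemma mult_if0_2: "(if P then b else 0) * a = (if P then b * a else (0::'k::field))" by simp
lemma sum_if0: "(\<Sum>j\<in>A. if P then f j else 0) = (if P then (\<Sum>j\<in>A. f j) else (0::'k::field))" by simp
lemmas bvec_simps = sum_if0 mult_bvec1 mult_bvec2 mult_if0_1 mult_if0_2 sum.delta sum.delta' if_distrib[of "\<lambda>x. x * _"]

lemma ba_ext:
  fixes X Y :: "'i::finite \<Rightarrow> 'i \<Rightarrow> 'k::field"
  assumes "\<And>F. bilin F \<Longrightarrow> ba F X = ba F Y"
  shows "X = Y"
proof (rule ext, rule ext)
  fix a b
  let ?F = "\<lambda>(p::'i\<Rightarrow>'k) (q::'i\<Rightarrow>'k) (k::'i). p a * q b"
  have "bilin ?F" by (intro bilinI linI) (auto simp: algebra_simps)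
  then have "ba ?F X = ba ?F Y" by (rule assms)
  then have "ba ?F X a = ba ?F Y a" by simp
  moreover have "ba ?F Z a = Z a b" for Z :: "'i \<Rightarrow> 'i \<Rightarrow> 'k"
  proof -
    have "ba ?F Z a = (\<Sum>i\<in>UNIV. \<Sum>j\<in>UNIV. Z i j * bvec i a * bvec j b)"
      by (simp add: ba_def' mult.assoc)
    also have "\<dots> = (\<Sum>i\<in>UNIV. Z i b * bvec i a)"
      by (simp add: sum_bvecR2)
    also have "\<dots> = Z a b" by (simp add: sum_bvecR2)
    finally show ?thesis .
  qed
  ultimately show "X a b = Y a b" by simp
qed

lemma vmul_bvec: "vmul H (bvec i) (bvec j) = (\<lambda>k. mu H i j k)"
proof
  fix k
  have "vmul H (bvec i) (bvec j) k = (\<Sum>a\<in>UNIV. \<Sum>b\<in>UNIV. bvec i a * bvec j b * mu H a b k)"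
    by (simp add: vmul_def)
  also have "\<dots> = (\<Sum>a\<in>UNIV. bvec i a * mu H a j k)"
    by (rule sum.cong[OF refl]) (simp add: mult.assoc sum_distrib_left[symmetric] sum_bvecL)
  also have "\<dots> = mu H i j k" by (simp add: sum_bvecL)
  finally show "vmul H (bvec i) (bvec j) k = mu H i j k" .
qed

lemma vDelta_bvec: "vDelta H (bvec k) = delta H k"
  by (rule ext, rule ext) (simp add: vDelta_def sum_bvecL)

lemma sum_out3: "(\<Sum>i\<in>A. \<Sum>j\<in>B. \<Sum>p\<in>C. \<Sum>x\<in>D. h i j p x) = (\<Sum>x\<in>D. \<Sum>i\<in>A. \<Sum>j\<in>B. \<Sum>p\<in>C. h i j p x)"
proof -
  have "(\<Sum>i\<in>A. \<Sum>j\<in>B. \<Sum>p\<in>C. \<Sum>x\<in>D. h i j p x) = (\<Sum>i\<in>A. \<Sum>j\<in>B. \<Sum>x\<in>D. \<Sum>p\<in>C. h i j p x)"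
    by (rule sum.cong[OF refl], rule sum.cong[OF refl], rule sum.swap)
  also have "\<dots> = (\<Sum>i\<in>A. \<Sum>x\<in>D. \<Sum>j\<in>B. \<Sum>p\<in>C. h i j p x)"
    by (rule sum.cong[OF refl], rule sum.swap)
  also have "\<dots> = (\<Sum>x\<in>D. \<Sum>i\<in>A. \<Sum>j\<in>B. \<Sum>p\<in>C. h i j p x)"
    by (rule sum.swap)
  finally show ?thesis .
qed

lemma sum_block3: "(\<Sum>i\<in>A. \<Sum>j\<in>B. \<Sum>p\<in>C. \<Sum>x\<in>D. \<Sum>y\<in>E. \<Sum>z\<in>F. h i j p x y z) =
   (\<Sum>x\<in>D. \<Sum>y\<in>E. \<Sum>z\<in>F. \<Sum>i\<in>A. \<Sum>j\<in>B. \<Sum>p\<in>C. h i j p x y z)"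
proof -
  have "(\<Sum>i\<in>A. \<Sum>j\<in>B. \<Sum>p\<in>C. \<Sum>x\<in>D. \<Sum>y\<in>E. \<Sum>z\<in>F. h i j p x y z) =
     (\<Sum>x\<in>D. \<Sum>i\<in>A. \<Sum>j\<in>B. \<Sum>p\<in>C. \<Sum>y\<in>E. \<Sum>z\<in>F. h i j p x y z)" by (rule sum_out3)
  also have "\<dots> = (\<Sum>x\<in>D. \<Sum>y\<in>E. \<Sum>i\<in>A. \<Sum>j\<in>B. \<Sum>p\<in>C. \<Sum>z\<in>F. h i j p x y z)"
    by (rule sum.cong[OF refl], rule sum_out3)
  also have "\<dots> = (\<Sum>x\<in>D. \<Sum>y\<in>E. \<Sum>z\<in>F. \<Sum>i\<in>A. \<Sum>j\<in>B. \<Sum>p\<in>C. h i j p x y z)"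
    by (rule sum.cong[OF refl], rule sum.cong[OF refl], rule sum_out3)
  finally show ?thesis .
qed

lemma ba_tmul:
  assumes "bilin F"
  shows "ba F (tmul H X Y) = ba (\<lambda>p q. ba (\<lambda>p' q'. F (vmul H p p') (vmul H q q')) Y) X"
proof (rule ext)
  fix c
  have "ba F (tmul H X Y) c = (\<Sum>k\<in>UNIV. \<Sum>l\<in>UNIV. \<Sum>i\<in>UNIV. \<Sum>j\<in>UNIV. \<Sum>i'\<in>UNIV. \<Sum>j'\<in>UNIV.
      X i j * Y i' j' * mu H i i' k * mu H j j' l * F (bvec k) (bvec l) c)"
    by (simp add: ba_def' tmul_def sum_distrib_right)
  also have "\<dots> = (\<Sum>i\<in>UNIV. \<Sum>j\<in>UNIV. \<Sum>k\<in>UNIV. \<Sum>l\<in>UNIV. \<Sum>i'\<in>UNIV. \<Sum>j'\<in>UNIV.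
      X i j * Y i' j' * mu H i i' k * mu H j j' l * F (bvec k) (bvec l) c)"
    by (rule sum4_swap)
  also have "\<dots> = (\<Sum>i\<in>UNIV. \<Sum>j\<in>UNIV. \<Sum>i'\<in>UNIV. \<Sum>j'\<in>UNIV. \<Sum>k\<in>UNIV. \<Sum>l\<in>UNIV.
      X i j * Y i' j' * mu H i i' k * mu H j j' l * F (bvec k) (bvec l) c)"
    by (rule sum.cong[OF refl], rule sum.cong[OF refl], rule sum4_swap)
  also have "\<dots> = ba (\<lambda>p q. ba (\<lambda>p' q'. F (vmul H p p') (vmul H q q')) Y) X c"
    by (simp add: ba_def' vmul_bvec bilin_expand[OF assms, of "\<lambda>k. mu H _ _ k" "\<lambda>k. mu H _ _ k"]
          sum_distrib_left mult.assoc)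
  finally show "ba F (tmul H X Y) c = ba (\<lambda>p q. ba (\<lambda>p' q'. F (vmul H p p') (vmul H q q')) Y) X c" .
qed

definition mp :: "(('i::finite \<Rightarrow> 'k::field) \<Rightarrow> ('i \<Rightarrow> 'k)) \<Rightarrow> (('i \<Rightarrow> 'k) \<Rightarrow> ('i \<Rightarrow> 'k)) \<Rightarrow> ('i \<Rightarrow> 'i \<Rightarrow> 'k) \<Rightarrow> ('i \<Rightarrow> 'i \<Rightarrow> 'k)" where
  "mp f g X = (\<lambda>a b. \<Sum>i\<in>UNIV. \<Sum>j\<in>UNIV. X i j * f (bvec i) a * g (bvec j) b)"

lemma ba_mp:
  assumes "bilin F" "lin f" "lin g"
  shows "ba F (mp f g X) = ba (\<lambda>p q. F (f p) (g q)) X"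
proof (rule ext)
  fix c
  have "ba F (mp f g X) c = (\<Sum>a\<in>UNIV. \<Sum>b\<in>UNIV. \<Sum>i\<in>UNIV. \<Sum>j\<in>UNIV. X i j * f (bvec i) a * g (bvec j) b * F (bvec a) (bvec b) c)"
    by (simp add: ba_def' mp_def sum_distrib_right)
  also have "\<dots> = (\<Sum>i\<in>UNIV. \<Sum>j\<in>UNIV. \<Sum>a\<in>UNIV. \<Sum>b\<in>UNIV. X i j * f (bvec i) a * g (bvec j) b * F (bvec a) (bvec b) c)"
    by (rule sum4_swap)
  also have "\<dots> = ba (\<lambda>p q. F (f p) (g q)) X c"
    by (simp add: ba_def' bilin_expand[OF assms(1), of "f _" "g _"] sum_distrib_left mult.assoc)
  finally show "ba F (mp f g X) c = ba (\<lambda>p q. F (f p) (g q)) X c" .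
qed

definition tri :: "(('i::finite \<Rightarrow> 'k::field) \<Rightarrow> ('i \<Rightarrow> 'k) \<Rightarrow> ('i \<Rightarrow> 'k) \<Rightarrow> ('i \<Rightarrow> 'k)) \<Rightarrow> ('i \<Rightarrow> 'i \<Rightarrow> 'i \<Rightarrow> 'k) \<Rightarrow> ('i \<Rightarrow> 'k)" where
  "tri F T = (\<lambda>c. \<Sum>a\<in>UNIV. \<Sum>b\<in>UNIV. \<Sum>d\<in>UNIV. T a b d * F (bvec a) (bvec b) (bvec d) c)"

lemma tri_Delta_id: "tri F (Delta_id H X) = ba (\<lambda>p q. ba (\<lambda>p1 p2. F p1 p2 q) (vDelta H p)) X"
proof (rule ext)
  fix c
  have "tri F (Delta_id H X) c = (\<Sum>a\<in>UNIV. \<Sum>b\<in>UNIV. \<Sum>d\<in>UNIV. \<Sum>k\<in>UNIV. X k d * delta H k a b * F (bvec a) (bvec b) (bvec d) c)"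
    by (simp add: tri_def Delta_id_def sum_distrib_right)
  also have "\<dots> = (\<Sum>a\<in>UNIV. \<Sum>b\<in>UNIV. \<Sum>k\<in>UNIV. \<Sum>d\<in>UNIV. X k d * delta H k a b * F (bvec a) (bvec b) (bvec d) c)"
    by (rule sum.cong[OF refl], rule sum.cong[OF refl], rule sum.swap)
  also have "\<dots> = (\<Sum>k\<in>UNIV. \<Sum>d\<in>UNIV. \<Sum>a\<in>UNIV. \<Sum>b\<in>UNIV. X k d * delta H k a b * F (bvec a) (bvec b) (bvec d) c)"
    by (rule sum4_swap)
  also have "\<dots> = ba (\<lambda>p q. ba (\<lambda>p1 p2. F p1 p2 q) (vDelta H p)) X c"
    by (simp add: ba_def' vDelta_bvec sum_distrib_left mult.assoc)
  finally show "tri F (Delta_id H X) c = ba (\<lambda>p q. ba (\<lambda>p1 p2. F p1 p2 q) (vDelta H p)) X c" .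
qed

lemma tri_id_Delta: "tri F (id_Delta H X) = ba (\<lambda>p q. ba (\<lambda>q1 q2. F p q1 q2) (vDelta H q)) X"
proof (rule ext)
  fix c
  have "tri F (id_Delta H X) c = (\<Sum>a\<in>UNIV. \<Sum>b\<in>UNIV. \<Sum>d\<in>UNIV. \<Sum>k\<in>UNIV. X a k * delta H k b d * F (bvec a) (bvec b) (bvec d) c)"
    by (simp add: tri_def id_Delta_def sum_distrib_right)
  also have "\<dots> = (\<Sum>a\<in>UNIV. \<Sum>k\<in>UNIV. \<Sum>b\<in>UNIV. \<Sum>d\<in>UNIV. X a k * delta H k b d * F (bvec a) (bvec b) (bvec d) c)"
    by (rule sum.cong[OF refl], subst sum.swap, rule sum.cong[OF refl], rule sum.swap)
  also have "\<dots> = ba (\<lambda>p q. ba (\<lambda>q1 q2. F p q1 q2) (vDelta H q)) X c"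
    by (simp add: ba_def' vDelta_bvec sum_distrib_left mult.assoc)
  finally show "tri F (id_Delta H X) c = ba (\<lambda>p q. ba (\<lambda>q1 q2. F p q1 q2) (vDelta H q)) X c" .
qed


definition tril :: "(('i::finite \<Rightarrow> 'k::field) \<Rightarrow> ('i \<Rightarrow> 'k) \<Rightarrow> ('i \<Rightarrow> 'k) \<Rightarrow> ('j \<Rightarrow> 'k)) \<Rightarrow> bool" where
  "tril F \<longleftrightarrow> (\<forall>x y. lin (F x y)) \<and> (\<forall>x z. lin (\<lambda>y. F x y z)) \<and> (\<forall>y z. lin (\<lambda>x. F x y z))"

lemma trilI: "(\<And>x y. lin (\<lambda>z. F x y z)) \<Longrightarrow> (\<And>x z. lin (\<lambda>y. F x y z)) \<Longrightarrow> (\<And>y z. lin (\<lambda>x. F x y z)) \<Longrightarrow> tril F"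
  unfolding tril_def by auto

lemma tril_expand:
  assumes "tril F"
  shows "F x y z = (\<lambda>c. \<Sum>i\<in>UNIV. \<Sum>j\<in>UNIV. \<Sum>p\<in>UNIV. x i * y j * z p * F (bvec i) (bvec j) (bvec p) c)"
proof -
  have l1: "lin (\<lambda>x. F x y z)" for y z using assms unfolding tril_def by auto
  have l2: "lin (\<lambda>y. F x y z)" for x z using assms unfolding tril_def by auto
  have l3: "lin (F x y)" for x y using assms unfolding tril_def by auto
  have "F x y z = (\<lambda>c. \<Sum>i\<in>UNIV. x i * F (bvec i) y z c)"
    using lin_expand[OF l1[of y z], of x] by simp
  also have "\<dots> = (\<lambda>c. \<Sum>i\<in>UNIV. x i * (\<Sum>j\<in>UNIV. y j * F (bvec i) (bvec j) z c))"
  proof -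
    have e2: "F (bvec i) y z = (\<lambda>c. \<Sum>j\<in>UNIV. y j * F (bvec i) (bvec j) z c)" for i
      using lin_expand[OF l2[of "bvec i" z], of y] by simp
    show ?thesis by (simp only: e2)
  qed
  also have "\<dots> = (\<lambda>c. \<Sum>i\<in>UNIV. x i * (\<Sum>j\<in>UNIV. y j * (\<Sum>p\<in>UNIV. z p * F (bvec i) (bvec j) (bvec p) c)))"
  proof -
    have e3: "F (bvec i) (bvec j) z = (\<lambda>c. \<Sum>p\<in>UNIV. z p * F (bvec i) (bvec j) (bvec p) c)" for i j
      by (rule lin_expand[OF l3])
    show ?thesis by (simp only: e3)
  qed
  finally show ?thesis by (simp add: sum_distrib_left mult.assoc)
qed

lemma tri_t3mul:
  assumes "tril F"
  shows "tri F (t3mul H X Y) = tri (\<lambda>a b c. tri (\<lambda>a' b' c'. F (vmul H a a') (vmul H b b') (vmul H c c')) Y) X"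
proof (rule ext)
  fix c0
  have "tri F (t3mul H X Y) c0 = (\<Sum>k\<in>UNIV. \<Sum>l\<in>UNIV. \<Sum>m\<in>UNIV. \<Sum>i\<in>UNIV. \<Sum>j\<in>UNIV. \<Sum>p\<in>UNIV.
      \<Sum>i'\<in>UNIV. \<Sum>j'\<in>UNIV. \<Sum>p'\<in>UNIV.
      X i j p * Y i' j' p' * mu H i i' k * mu H j j' l * mu H p p' m * F (bvec k) (bvec l) (bvec m) c0)"
    by (simp add: tri_def t3mul_def sum_distrib_right)
  also have "\<dots> = (\<Sum>i\<in>UNIV. \<Sum>j\<in>UNIV. \<Sum>p\<in>UNIV. \<Sum>k\<in>UNIV. \<Sum>l\<in>UNIV. \<Sum>m\<in>UNIV.
      \<Sum>i'\<in>UNIV. \<Sum>j'\<in>UNIV. \<Sum>p'\<in>UNIV.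
      X i j p * Y i' j' p' * mu H i i' k * mu H j j' l * mu H p p' m * F (bvec k) (bvec l) (bvec m) c0)"
    by (rule sum_block3)
  also have "\<dots> = (\<Sum>i\<in>UNIV. \<Sum>j\<in>UNIV. \<Sum>p\<in>UNIV. \<Sum>i'\<in>UNIV. \<Sum>j'\<in>UNIV. \<Sum>p'\<in>UNIV.
      \<Sum>k\<in>UNIV. \<Sum>l\<in>UNIV. \<Sum>m\<in>UNIV.
      X i j p * Y i' j' p' * mu H i i' k * mu H j j' l * mu H p p' m * F (bvec k) (bvec l) (bvec m) c0)"
    by (rule sum.cong[OF refl], rule sum.cong[OF refl], rule sum.cong[OF refl], rule sum_block3)
  also have "\<dots> = tri (\<lambda>a b c. tri (\<lambda>a' b' c'. F (vmul H a a') (vmul H b b') (vmul H c c')) Y) X c0"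
    by (simp add: tri_def vmul_bvec tril_expand[OF assms, of "\<lambda>k. mu H _ _ k" "\<lambda>k. mu H _ _ k" "\<lambda>k. mu H _ _ k"]
          sum_distrib_left mult.assoc)
  finally show "tri F (t3mul H X Y) c0 = tri (\<lambda>a b c. tri (\<lambda>a' b' c'. F (vmul H a a') (vmul H b b') (vmul H c c')) Y) X c0" .
qed

lemma tri_R13:
  assumes "\<And>x z. lin (\<lambda>y. F x y z)"
  shows "tri F (R13 H R) = ba (\<lambda>p q. F p (vone H) q) R"
proof (rule ext)
  fix c
  have e: "F (bvec a) (vone H) (bvec d) = (\<lambda>c. \<Sum>b\<in>UNIV. vone H b * F (bvec a) (bvec b) (bvec d) c)" for a d
    using lin_expand[OF assms[of "bvec a" "bvec d"], of "vone H"] by simp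
  have "tri F (R13 H R) c = (\<Sum>a\<in>UNIV. \<Sum>b\<in>UNIV. \<Sum>d\<in>UNIV. R a d * (vone H b * F (bvec a) (bvec b) (bvec d) c))"
    by (simp add: tri_def R13_def mult.assoc)
  also have "\<dots> = (\<Sum>a\<in>UNIV. \<Sum>d\<in>UNIV. \<Sum>b\<in>UNIV. R a d * (vone H b * F (bvec a) (bvec b) (bvec d) c))"
    by (rule sum.cong[OF refl], rule sum.swap)
  also have "\<dots> = ba (\<lambda>p q. F p (vone H) q) R c"
    by (simp add: ba_def' e sum_distrib_left)
  finally show "tri F (R13 H R) c = ba (\<lambda>p q. F p (vone H) q) R c" .
qed

lemma tri_R23:
  assumes "\<And>y z. lin (\<lambda>x. F x y z)"
  shows "tri F (R23 H R) = ba (\<lambda>p q. F (vone H) p q) R"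
proof (rule ext)
  fix c
  have e: "F (vone H) (bvec b) (bvec d) = (\<lambda>c. \<Sum>a\<in>UNIV. vone H a * F (bvec a) (bvec b) (bvec d) c)" for b d
    using lin_expand[OF assms[of "bvec b" "bvec d"], of "vone H"] by simp
  have "tri F (R23 H R) c = (\<Sum>a\<in>UNIV. \<Sum>b\<in>UNIV. \<Sum>d\<in>UNIV. R b d * (vone H a * F (bvec a) (bvec b) (bvec d) c))"
    by (simp add: tri_def R23_def algebra_simps)
  also have "\<dots> = (\<Sum>b\<in>UNIV. \<Sum>a\<in>UNIV. \<Sum>d\<in>UNIV. R b d * (vone H a * F (bvec a) (bvec b) (bvec d) c))"
    by (rule sum.swap)
  also have "\<dots> = (\<Sum>b\<in>UNIV. \<Sum>d\<in>UNIV. \<Sum>a\<in>UNIV. R b d * (vone H a * F (bvec a) (bvec b) (bvec d) c))"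
    by (rule sum.cong[OF refl], rule sum.swap)
  also have "\<dots> = ba (\<lambda>p q. F (vone H) p q) R c"
    by (simp add: ba_def' e sum_distrib_left)
  finally show "tri F (R23 H R) c = ba (\<lambda>p q. F (vone H) p q) R c" .
qed

lemma tri_R12:
  assumes "\<And>x y. lin (\<lambda>z. F x y z)"
  shows "tri F (R12 H R) = ba (\<lambda>p q. F p q (vone H)) R"
proof (rule ext)
  fix c
  have e: "F (bvec a) (bvec b) (vone H) = (\<lambda>c. \<Sum>d\<in>UNIV. vone H d * F (bvec a) (bvec b) (bvec d) c)" for a b
    using lin_expand[OF assms[of "bvec a" "bvec b"], of "vone H"] by simp
  show "tri F (R12 H R) c = ba (\<lambda>p q. F p q (vone H)) R c"
    by (simp add: tri_def R12_def ba_def' e sum_distrib_left mult.assoc)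
qed

lemma lin_id: "lin (\<lambda>x. x)"
  by (rule linI) auto

lemma lin_vmulL: "lin f \<Longrightarrow> lin (\<lambda>x. vmul H (f x) c)"
  by (rule linI) (auto simp: vmul_def lin_add lin_scale algebra_simps sum.distrib sum_distrib_left)

lemma lin_vmulR: "lin f \<Longrightarrow> lin (\<lambda>x. vmul H c (f x))"
  by (rule linI) (auto simp: vmul_def lin_add lin_scale algebra_simps sum.distrib sum_distrib_left)

lemma lin_vS: "lin f \<Longrightarrow> lin (\<lambda>x. vS H (f x))"
  by (rule linI) (auto simp: vS_def lin_add lin_scale algebra_simps sum.distrib sum_distrib_left)

lemma lin_epsL: "lin f \<Longrightarrow> lin (\<lambda>x k. veps H (f x) * c k)"
  by (rule linI) (auto simp: veps_def lin_add lin_scale algebra_simps sum.distrib sum_distrib_left)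

lemma lin_scR: "lin f \<Longrightarrow> lin (\<lambda>x k. a * f x k)"
  by (rule linI) (auto simp: lin_add lin_scale algebra_simps)

lemma lin_baD: "lin f \<Longrightarrow> lin (\<lambda>x. ba F (vDelta H (f x)))"
  by (rule linI) (auto simp: ba_def' vDelta_def lin_add lin_scale algebra_simps sum.distrib sum_distrib_left)

lemma lin_comp: "lin g \<Longrightarrow> lin f \<Longrightarrow> lin (\<lambda>x. g (f x))"
  by (rule linI) (auto simp: lin_add lin_scale)

lemma lin_tri:
  assumes "\<And>i j l. lin (\<lambda>x. F x (bvec i) (bvec j) (bvec l))"
  shows "lin (\<lambda>x. tri (F x) T)"
proof (rule linI)
  fix x y
  have a: "F (\<lambda>k. x k + y k) (bvec i) (bvec j) (bvec l) = (\<lambda>k. F x (bvec i) (bvec j) (bvec l) k + F y (bvec i) (bvec j) (bvec l) k)" for i j l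
    using lin_add[OF assms[of i j l]] by simp
  show "tri (F (\<lambda>k. x k + y k)) T = (\<lambda>k. tri (F x) T k + tri (F y) T k)"
    by (rule ext) (simp add: tri_def a sum.distrib algebra_simps)
next
  fix c x
  have a: "F (\<lambda>k. c * x k) (bvec i) (bvec j) (bvec l) = (\<lambda>k. c * F x (bvec i) (bvec j) (bvec l) k)" for i j l
    using lin_scale[OF assms[of i j l]] by simp
  show "tri (F (\<lambda>k. c * x k)) T = (\<lambda>k. c * tri (F x) T k)"
    by (rule ext) (simp add: tri_def a sum_distrib_left algebra_simps)
qed

lemmas lin_intros = lin_id lin_vmulL lin_vmulR lin_vS lin_epsL lin_scR lin_baD lin_ba lin_tri




locale hopfL =
  fixes H :: "('k::field, 'i::finite) hopf"
  assumes hopf: "is_hopf H"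
begin

abbreviation m where "m \<equiv> vmul H"
abbreviation one where "one \<equiv> vone H"
abbreviation S where "S \<equiv> vS H"
abbreviation D where "D \<equiv> vDelta H"
abbreviation eps where "eps \<equiv> veps H"

lemma assoc: "m (m x y) z = m x (m y z)"
  using hopf unfolding is_hopf_def by blast
lemma unitL[simp]: "m one x = x"
  using hopf unfolding is_hopf_def by blast
lemma unitR[simp]: "m x one = x"
  using hopf unfolding is_hopf_def by blast
lemma coassoc: "Delta_id H (D x) = id_Delta H (D x)"
  using hopf unfolding is_hopf_def by blast
lemma Dmult: "D (m x y) = tmul H (D x) (D y)"
  using hopf unfolding is_hopf_def by blast
lemma Done: "D one = tone H"
  using hopf unfolding is_hopf_def by blast
lemma epsmult: "eps (m x y) = eps x * eps y"
  using hopf unfolding is_hopf_def by blast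
lemma epsone[simp]: "eps one = 1"
  using hopf unfolding is_hopf_def by blast
lemma antipL: "ba (\<lambda>p q. m (S p) q) (D x) = (\<lambda>k. eps x * one k)"
  using hopf unfolding is_hopf_def by blast
lemma antipR: "ba (\<lambda>p q. m p (S q)) (D x) = (\<lambda>k. eps x * one k)"
  using hopf unfolding is_hopf_def by blast

lemma eps_bvec: "eps (bvec i) = counit H i"
  by (simp add: veps_def bvec_simps)

lemma counitL: "ba (\<lambda>p q k. eps p * q k) (D x) = x"
proof -
  have "(\<lambda>j. \<Sum>i\<in>UNIV. counit H i * D x i j) = x"
    using hopf unfolding is_hopf_def by blast
  moreover have "ba (\<lambda>p q k. eps p * q k) (D x) = (\<lambda>j. \<Sum>i\<in>UNIV. counit H i * D x i j)"
    by (rule ext) (simp add: ba_def' eps_bvec bvec_simps mult.commute)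
  ultimately show ?thesis by simp
qed

lemma counitR: "ba (\<lambda>p q k. eps q * p k) (D x) = x"
proof -
  have "(\<lambda>i. \<Sum>j\<in>UNIV. D x i j * counit H j) = x"
    using hopf unfolding is_hopf_def by blast
  moreover have "ba (\<lambda>p q k. eps q * p k) (D x) = (\<lambda>i. \<Sum>j\<in>UNIV. D x i j * counit H j)"
    by (rule ext) (simp add: ba_def' eps_bvec bvec_simps mult.commute)
  ultimately show ?thesis by simp
qed

lemma counitL_gen: assumes "lin G" shows "ba (\<lambda>p q k. eps p * G q k) (D x) = G x"
proof -
  have "G x = G (ba (\<lambda>p q k. eps p * q k) (D x))" by (simp only: counitL)
  also have "\<dots> = ba (\<lambda>p q. G (\<lambda>k. eps p * q k)) (D x)" by (rule ba_lin_out[OF assms])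
  also have "\<dots> = ba (\<lambda>p q k. eps p * G q k) (D x)" by (simp only: lin_scale[OF assms])
  finally show ?thesis by simp
qed
lemma counitR_gen: assumes "lin G" shows "ba (\<lambda>p q k. eps q * G p k) (D x) = G x"
proof -
  have "G x = G (ba (\<lambda>p q k. eps q * p k) (D x))" by (simp only: counitR)
  also have "\<dots> = ba (\<lambda>p q. G (\<lambda>k. eps q * p k)) (D x)" by (rule ba_lin_out[OF assms])
  also have "\<dots> = ba (\<lambda>p q k. eps q * G p k) (D x)" by (simp only: lin_scale[OF assms])
  finally show ?thesis by simp
qed
lemma antipL_gen: assumes "lin G" shows "ba (\<lambda>p q. G (m (S p) q)) (D x) = (\<lambda>k. eps x * G one k)"
proof -
  have "ba (\<lambda>p q. G (m (S p) q)) (D x) = G (ba (\<lambda>p q. m (S p) q) (D x))" by (rule ba_lin_out[OF assms, symmetric])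
  also have "\<dots> = G (\<lambda>k. eps x * one k)" by (simp only: antipL)
  also have "\<dots> = (\<lambda>k. eps x * G one k)" by (rule lin_scale[OF assms])
  finally show ?thesis .
qed
lemma antipR_gen: assumes "lin G" shows "ba (\<lambda>p q. G (m p (S q))) (D x) = (\<lambda>k. eps x * G one k)"
proof -
  have "ba (\<lambda>p q. G (m p (S q))) (D x) = G (ba (\<lambda>p q. m p (S q)) (D x))" by (rule ba_lin_out[OF assms, symmetric])
  also have "\<dots> = G (\<lambda>k. eps x * one k)" by (simp only: antipR)
  also have "\<dots> = (\<lambda>k. eps x * G one k)" by (rule lin_scale[OF assms])
  finally show ?thesis .
qed

lemma ba_tmul_D: assumes "bilin F" shows "ba (\<lambda>p q. ba (\<lambda>p' q'. F (m p p') (m q q')) (D y)) (D x) = ba F (D (m x y))"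
proof -
  have "ba F (D (m x y)) = ba F (tmul H (D x) (D y))" by (simp only: Dmult)
  also have "\<dots> = ba (\<lambda>p q. ba (\<lambda>p' q'. F (m p p') (m q q')) (D y)) (D x)" by (rule ba_tmul[OF assms])
  finally show ?thesis by (rule sym)
qed

lemma S_one: "S one = one"
proof -
  have "ba (\<lambda>p q. m (S p) q) (D one) = ba (\<lambda>p q. m (S p) q) (tens one one)"
    unfolding Done tone_def ..
  also have "\<dots> = m (S one) one"
    by (rule ba_tens) (intro bilinI lin_intros)
  finally have "m (S one) one = (\<lambda>k. eps one * one k)" unfolding antipL by (rule sym)
  then show ?thesis by simp
qed

lemma S_antimult: "S (m x y) = m (S y) (S x)"
proof -
  define K where "K = (\<lambda>x1 x2 x3 y1 y2 y3. m (S y1) (m (S x1) (m x2 (m y2 (S (m x3 y3))))))"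
  define Phi where "Phi = tri (\<lambda>x1 x2 x3. tri (\<lambda>y1 y2 y3. K x1 x2 x3 y1 y2 y3) (Delta_id H (D y))) (Delta_id H (D x))"
  define L where "L = (\<lambda>x3 z. tri (\<lambda>y1 y2 y3. m (S y1) (m z (m y2 (S (m x3 y3))))) (Delta_id H (D y)))"
  have linL: "lin (L x3)" for x3 unfolding L_def by (intro lin_intros)
  have "Phi = ba (\<lambda>p x3. ba (\<lambda>x1 x2. L x3 (m (S x1) x2)) (D p)) (D x)"
    unfolding Phi_def tri_Delta_id L_def K_def by (simp add: assoc)
  also have "\<dots> = ba (\<lambda>p x3 k. eps p * L x3 one k) (D x)"
    by (simp add: antipL_gen[OF linL])
  also have "\<dots> = L x one"
    by (rule counitL_gen[of "\<lambda>x3. L x3 one"]) (unfold L_def, intro lin_intros)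
  also have "\<dots> = ba (\<lambda>p y3. ba (\<lambda>y1 y2. m (m (S y1) y2) (S (m x y3))) (D p)) (D y)"
    unfolding L_def tri_Delta_id by (simp add: assoc)
  also have "\<dots> = ba (\<lambda>p y3 k. eps p * S (m x y3) k) (D y)"
    by (subst antipL_gen[of "\<lambda>z. m z _"]) (intro lin_intros, simp)
  also have "\<dots> = S (m x y)"
    by (rule counitL_gen[of "\<lambda>y3. S (m x y3)"]) (intro lin_intros)
  finally have B: "Phi = S (m x y)" .
  have "Phi = ba (\<lambda>x1 q. ba (\<lambda>x2 x3. ba (\<lambda>y1 r. ba (\<lambda>y2 y3. K x1 x2 x3 y1 y2 y3) (D r)) (D y)) (D q)) (D x)"
    unfolding Phi_def coassoc tri_id_Delta ..
  also have "\<dots> = ba (\<lambda>x1 q. ba (\<lambda>y1 r. ba (\<lambda>x2 x3. ba (\<lambda>y2 y3. K x1 x2 x3 y1 y2 y3) (D r)) (D q)) (D y)) (D x)"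
    by (subst ba_swap) (rule refl)
  also have "\<dots> = ba (\<lambda>x1 q. ba (\<lambda>y1 r. ba (\<lambda>a b. m (S y1) (m (S x1) (m a (S b)))) (D (m q r))) (D y)) (D x)"
  proof -
    have "ba (\<lambda>x2 x3. ba (\<lambda>y2 y3. K x1 x2 x3 y1 y2 y3) (D r)) (D q) = ba (\<lambda>a b. m (S y1) (m (S x1) (m a (S b)))) (D (m q r))"
      for x1 y1 q r
      unfolding K_def
      by (subst ba_tmul_D[symmetric]) (intro bilinI lin_intros, simp add: assoc)
    then show ?thesis by simp
  qed
  also have "\<dots> = ba (\<lambda>x1 q. ba (\<lambda>y1 r k. eps r * (\<lambda>k. eps q * m (S y1) (S x1) k) k) (D y)) (D x)"
  proof -
    have "ba (\<lambda>a b. m (S y1) (m (S x1) (m a (S b)))) (D (m q r)) = (\<lambda>k. eps r * (\<lambda>k. eps q * m (S y1) (S x1) k) k)"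
      for x1 y1 q r
      by (subst antipR_gen[of "\<lambda>z. m (S y1) (m (S x1) z)"]) (intro lin_intros, simp add: epsmult mult.assoc mult.left_commute)
    then show ?thesis by simp
  qed
  also have "\<dots> = ba (\<lambda>x1 q k. eps q * m (S y) (S x1) k) (D x)"
  proof -
    have "ba (\<lambda>y1 r k. eps r * (\<lambda>k. eps q * m (S y1) (S x1) k) k) (D y) = (\<lambda>k. eps q * m (S y) (S x1) k)" for q x1
      by (rule counitR_gen[of "\<lambda>y1 k. eps q * m (S y1) (S x1) k"]) (intro lin_intros)
    then show ?thesis by simp
  qed
  also have "\<dots> = m (S y) (S x)"
    by (rule counitR_gen[of "\<lambda>x1. m (S y) (S x1)"]) (intro lin_intros)
  finally show ?thesis using B by simp
qed


lemma bilin_linL: "bilin F \<Longrightarrow> lin f \<Longrightarrow> lin (\<lambda>x. F (f x) c)"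
  unfolding bilin_def by (rule lin_comp[of "\<lambda>x. F x c" f]) auto
lemma bilin_linR: "bilin F \<Longrightarrow> lin f \<Longrightarrow> lin (\<lambda>x. F c (f x))"
  unfolding bilin_def by (rule lin_comp[of "F c" f]) auto

lemma ba_tone: "bilin F \<Longrightarrow> ba F (tone H) = F one one"
  unfolding tone_def by (rule ba_tens)

lemma tmul_assoc: "tmul H (tmul H X Y) Z = tmul H X (tmul H Y Z)"
proof (rule ba_ext)
  fix F :: "('i \<Rightarrow> 'k) \<Rightarrow> ('i \<Rightarrow> 'k) \<Rightarrow> 'i \<Rightarrow> 'k" assume F: "bilin F"
  note FL = bilin_linL[OF F] and FR = bilin_linR[OF F]
  have "ba F (tmul H (tmul H X Y) Z) = ba (\<lambda>p q. ba (\<lambda>p' q'. F (m p p') (m q q')) Z) (tmul H X Y)"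
    by (rule ba_tmul[OF F])
  also have "\<dots> = ba (\<lambda>p q. ba (\<lambda>p' q'. ba (\<lambda>p'' q''. F (m (m p p') p'') (m (m q q') q'')) Z) Y) X"
    by (rule ba_tmul) (intro bilinI lin_intros FL FR)
  also have "\<dots> = ba (\<lambda>p q. ba (\<lambda>p' q'. F (m p p') (m q q')) (tmul H Y Z)) X"
    by (simp add: ba_tmul[of "\<lambda>p' q'. F (m _ p') (m _ q')"] bilinI lin_intros FL FR assoc)
  also have "\<dots> = ba F (tmul H X (tmul H Y Z))"
    by (rule ba_tmul[OF F, symmetric])
  finally show "ba F (tmul H (tmul H X Y) Z) = ba F (tmul H X (tmul H Y Z))" .
qed

lemma tmul_oneR: "tmul H X (tone H) = X"
proof (rule ba_ext)
  fix F :: "('i \<Rightarrow> 'k) \<Rightarrow> ('i \<Rightarrow> 'k) \<Rightarrow> 'i \<Rightarrow> 'k" assume F: "bilin F"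
  note FL = bilin_linL[OF F] and FR = bilin_linR[OF F]
  have "ba F (tmul H X (tone H)) = ba (\<lambda>p q. ba (\<lambda>p' q'. F (m p p') (m q q')) (tone H)) X"
    by (rule ba_tmul[OF F])
  also have "\<dots> = ba F X"
    by (simp add: ba_tone bilinI lin_intros FL FR)
  finally show "ba F (tmul H X (tone H)) = ba F X" .
qed

lemma tmul_oneL: "tmul H (tone H) X = X"
proof (rule ba_ext)
  fix F :: "('i \<Rightarrow> 'k) \<Rightarrow> ('i \<Rightarrow> 'k) \<Rightarrow> 'i \<Rightarrow> 'k" assume F: "bilin F"
  note FL = bilin_linL[OF F] and FR = bilin_linR[OF F]
  have "ba F (tmul H (tone H) X) = ba (\<lambda>p q. ba (\<lambda>p' q'. F (m p p') (m q q')) X) (tone H)"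
    by (rule ba_tmul[OF F])
  also have "\<dots> = ba F X"
    by (subst ba_tone) (intro bilinI lin_intros FL FR, simp)
  finally show "ba F (tmul H (tone H) X) = ba F X" .
qed

end



locale qtL = hopfL H for H :: "('k::field, 'i::finite) hopf" +
  fixes R :: "'i \<Rightarrow> 'i \<Rightarrow> 'k"
  assumes qt: "quasitriangular H R"
  assumes Sbij: "bij (vS H)"
begin

definition r where "r = (SOME Rinv. tmul H R Rinv = tone H \<and> tmul H Rinv R = tone H \<and>
        (\<forall>a. tau (vDelta H a) = tmul H (tmul H R (vDelta H a)) Rinv))"

lemma r_props: "tmul H R r = tone H" "tmul H r R = tone H" "tau (D a) = tmul H (tmul H R (D a)) r"
proof -
  have "\<exists>Rinv. tmul H R Rinv = tone H \<and> tmul H Rinv R = tone H \<and>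
        (\<forall>a. tau (vDelta H a) = tmul H (tmul H R (vDelta H a)) Rinv)"
    using qt unfolding quasitriangular_def by blast
  then have "tmul H R r = tone H \<and> tmul H r R = tone H \<and> (\<forall>a. tau (vDelta H a) = tmul H (tmul H R (vDelta H a)) r)"
    unfolding r_def by (rule someI_ex)
  then show "tmul H R r = tone H" "tmul H r R = tone H" "tau (D a) = tmul H (tmul H R (D a)) r" by auto
qed

lemma Rr: "tmul H R r = tone H" and rR: "tmul H r R = tone H"
  using r_props by auto

lemma DeltaR: "Delta_id H R = t3mul H (R13 H R) (R23 H R)"
  using qt unfolding quasitriangular_def by blast
lemma DeltaR2: "id_Delta H R = t3mul H (R13 H R) (R12 H R)"
  using qt unfolding quasitriangular_def by blast

lemma quasi: "tmul H (tau (D a)) R = tmul H R (D a)"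
  by (simp add: r_props(3) tmul_assoc rR tmul_oneR)

lemma QT_Delta1:
  assumes G: "tril G"
  shows "ba (\<lambda>p q. ba (\<lambda>x y. G x y q) (D p)) R = ba (\<lambda>p q. ba (\<lambda>p' q'. G p p' (m q q')) R) R"
proof -
  have l1: "lin (\<lambda>z. G x y z)" and l2: "lin (\<lambda>y. G x y z)" and l3: "lin (\<lambda>x. G x y z)" for x y z
    using G unfolding tril_def by auto
  have "ba (\<lambda>p q. ba (\<lambda>x y. G x y q) (D p)) R = tri G (Delta_id H R)"
    by (rule tri_Delta_id[symmetric])
  also have "\<dots> = tri G (t3mul H (R13 H R) (R23 H R))" by (simp only: DeltaR)
  also have "\<dots> = tri (\<lambda>a b c. tri (\<lambda>a' b' c'. G (m a a') (m b b') (m c c')) (R23 H R)) (R13 H R)"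
    by (rule tri_t3mul[OF G])
  also have "\<dots> = ba (\<lambda>p q. tri (\<lambda>a' b' c'. G (m p a') (m one b') (m q c')) (R23 H R)) R"
    by (rule tri_R13) (intro lin_intros l1 l2 l3 lin_comp[OF l1] lin_comp[OF l2] lin_comp[OF l3])
  also have "\<dots> = ba (\<lambda>p q. ba (\<lambda>p' q'. G p p' (m q q')) R) R"
    by (subst tri_R23) (intro lin_intros lin_comp[OF l3], simp)
  finally show ?thesis .
qed


lemma QT_Delta2:
  assumes G: "tril G"
  shows "ba (\<lambda>p q. ba (\<lambda>x y. G p x y) (D q)) R = ba (\<lambda>p q. ba (\<lambda>p' q'. G (m p p') q' q) R) R"
proof -
  have l1: "lin (\<lambda>z. G x y z)" and l2: "lin (\<lambda>y. G x y z)" and l3: "lin (\<lambda>x. G x y z)" for x y z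
    using G unfolding tril_def by auto
  have "ba (\<lambda>p q. ba (\<lambda>x y. G p x y) (D q)) R = tri G (id_Delta H R)"
    by (rule tri_id_Delta[symmetric])
  also have "\<dots> = tri G (t3mul H (R13 H R) (R12 H R))" by (simp only: DeltaR2)
  also have "\<dots> = tri (\<lambda>a b c. tri (\<lambda>a' b' c'. G (m a a') (m b b') (m c c')) (R12 H R)) (R13 H R)"
    by (rule tri_t3mul[OF G])
  also have "\<dots> = ba (\<lambda>p q. tri (\<lambda>a' b' c'. G (m p a') (m one b') (m q c')) (R12 H R)) R"
    by (rule tri_R13) (intro lin_intros l1 l2 l3 lin_comp[OF l1] lin_comp[OF l2] lin_comp[OF l3])
  also have "\<dots> = ba (\<lambda>p q. ba (\<lambda>p' q'. G (m p p') q' q) R) R"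
    by (subst tri_R12) (intro lin_intros lin_comp[OF l1], simp)
  finally show ?thesis .
qed

lemma ba_Rr: assumes "bilin G" shows "ba (\<lambda>c d. ba (\<lambda>x y. G (m c x) (m d y)) r) R = G one one"
  using ba_tmul[OF assms, of H R r] ba_tone[OF assms] Rr by simp
lemma ba_rR: assumes "bilin G" shows "ba (\<lambda>c d. ba (\<lambda>x y. G (m c x) (m d y)) R) r = G one one"
  using ba_tmul[OF assms, of H r R] ba_tone[OF assms] rR by simp

lemma z1: "ba (\<lambda>p q k. eps p * q k) R = one"
proof -
  define z where "z = ba (\<lambda>p q k. eps p * q k) R"
  have A: "ba F R = ba (\<lambda>p' q'. F p' (m z q')) R" if F: "bilin F" for F :: "('i \<Rightarrow> 'k) \<Rightarrow> ('i \<Rightarrow> 'k) \<Rightarrow> 'i \<Rightarrow> 'k"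
  proof -
    note FL = bilin_linL[OF F] and FR = bilin_linR[OF F]
    have "ba (\<lambda>p q. ba (\<lambda>x y k. eps x * F y q k) (D p)) R = ba (\<lambda>p q. ba (\<lambda>p' q' k. eps p * F p' (m q q') k) R) R"
      by (rule QT_Delta1) (intro trilI lin_intros FL FR)
    moreover have "ba (\<lambda>p q. ba (\<lambda>x y k. eps x * F y q k) (D p)) R = ba F R"
      by (subst counitL_gen) (intro lin_intros FL, rule refl)
    moreover have "ba (\<lambda>p q. ba (\<lambda>p' q' k. eps p * F p' (m q q') k) R) R = ba (\<lambda>p' q'. F p' (m z q')) R"
    proof -
      have "ba (\<lambda>p q k. eps p * F p' (m q q') k) R = F p' (m z q')" for p' q'
      proof -
        have lg: "lin (\<lambda>w. F p' (m w q'))" by (intro lin_intros FR)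
        show ?thesis unfolding z_def
          by (subst ba_lin_out[OF lg]) (simp add: lin_scale[OF lg])
      qed
      then show ?thesis by (subst ba_swap) simp
    qed
    ultimately show ?thesis by simp
  qed
  define F0 where "F0 = (\<lambda>(a::'i\<Rightarrow>'k) (b::'i\<Rightarrow>'k) k. eps a * b k)"
  have bF0: "bilin F0" unfolding F0_def by (intro bilinI lin_intros)
  note F0L = bilin_linL[OF bF0] and F0R = bilin_linR[OF bF0]
  have "ba (\<lambda>c d. ba (\<lambda>x y. F0 (m c x) (m d y)) r) R = ba (\<lambda>c d. ba (\<lambda>x y. F0 (m c x) (m (m z d) y)) r) R"
    by (subst A) (intro bilinI lin_intros F0L F0R, simp add: assoc)
  also have "\<dots> = ba (\<lambda>c d. ba (\<lambda>x y. (\<lambda>a b. F0 a (m z b)) (m c x) (m d y)) r) R"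
    by (simp add: assoc)
  also have "\<dots> = F0 one (m z one)"
    by (subst ba_Rr) (intro bilinI lin_intros F0L F0R, simp)
  finally have "F0 one one = F0 one (m z one)"
    by (subst (asm) ba_Rr[OF bF0]) 
  then show ?thesis unfolding F0_def z_def by simp
qed


lemma z2: "ba (\<lambda>p q k. eps q * p k) R = one"
proof -
  define z where "z = ba (\<lambda>p q k. eps q * p k) R"
  have A: "ba F R = ba (\<lambda>p' q'. F (m z p') q') R" if F: "bilin F" for F :: "('i \<Rightarrow> 'k) \<Rightarrow> ('i \<Rightarrow> 'k) \<Rightarrow> 'i \<Rightarrow> 'k"
  proof -
    note FL = bilin_linL[OF F] and FR = bilin_linR[OF F]
    have "ba (\<lambda>p q. ba (\<lambda>x y k. eps y * F p x k) (D q)) R = ba (\<lambda>p q. ba (\<lambda>p' q' k. eps q * F (m p p') q' k) R) R"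
      by (rule QT_Delta2) (intro trilI lin_intros FL FR)
    moreover have "ba (\<lambda>p q. ba (\<lambda>x y k. eps y * F p x k) (D q)) R = ba F R"
      by (subst counitR_gen) (intro lin_intros FR, rule refl)
    moreover have "ba (\<lambda>p q. ba (\<lambda>p' q' k. eps q * F (m p p') q' k) R) R = ba (\<lambda>p' q'. F (m z p') q') R"
    proof -
      have "ba (\<lambda>p q k. eps q * F (m p p') q' k) R = F (m z p') q'" for p' q'
      proof -
        have lg: "lin (\<lambda>w. F (m w p') q')" by (intro lin_intros FL)
        show ?thesis unfolding z_def
          by (subst ba_lin_out[OF lg]) (simp add: lin_scale[OF lg])
      qed
      then show ?thesis by (subst ba_swap) simp
    qed
    ultimately show ?thesis by simp
  qed
  define F0 where "F0 = (\<lambda>(a::'i\<Rightarrow>'k) (b::'i\<Rightarrow>'k) k. eps b * a k)"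
  have bF0: "bilin F0" unfolding F0_def by (intro bilinI lin_intros)
  note F0L = bilin_linL[OF bF0] and F0R = bilin_linR[OF bF0]
  have "ba (\<lambda>c d. ba (\<lambda>x y. F0 (m c x) (m d y)) r) R = ba (\<lambda>c d. ba (\<lambda>x y. F0 (m (m z c) x) (m d y)) r) R"
    by (subst A) (intro bilinI lin_intros F0L F0R, simp add: assoc)
  also have "\<dots> = ba (\<lambda>c d. ba (\<lambda>x y. (\<lambda>a b. F0 (m z a) b) (m c x) (m d y)) r) R"
    by (simp add: assoc)
  also have "\<dots> = F0 (m z one) one"
    by (subst ba_Rr) (intro bilinI lin_intros F0L F0R, simp)
  finally have "F0 one one = F0 (m z one) one"
    by (subst (asm) ba_Rr[OF bF0]) 
  then show ?thesis unfolding F0_def z_def by simp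
qed

lemma lin_S: "lin S" using lin_vS[OF lin_id, where H=H] by simp

lemma mp_SR: "mp S (\<lambda>x. x) R = r"
proof -
  define r1 where "r1 = mp S (\<lambda>x. x) R"
  have "tmul H r1 R = tone H"
  proof (rule ba_ext)
    fix F :: "('i \<Rightarrow> 'k) \<Rightarrow> ('i \<Rightarrow> 'k) \<Rightarrow> 'i \<Rightarrow> 'k" assume F: "bilin F"
    note FL = bilin_linL[OF F] and FR = bilin_linR[OF F]
    have "ba F (tmul H r1 R) = ba (\<lambda>p q. ba (\<lambda>p' q'. F (m p p') (m q q')) R) r1"
      by (rule ba_tmul[OF F])
    also have "\<dots> = ba (\<lambda>p q. ba (\<lambda>p' q'. F (m (S p) p') (m q q')) R) R"
    proof -
      have "bilin (\<lambda>p q. ba (\<lambda>p' q'. F (m p p') (m q q')) R)" by (intro bilinI lin_intros FL FR)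
      then show ?thesis unfolding r1_def by (simp add: ba_mp lin_S lin_id)
    qed
    also have "\<dots> = ba (\<lambda>p q. ba (\<lambda>x y. F (m (S x) y) q) (D p)) R"
      by (rule QT_Delta1[symmetric]) (intro trilI lin_intros FL FR)
    also have "\<dots> = ba (\<lambda>p q k. eps p * F one q k) R"
      by (subst antipL_gen) (intro lin_intros FL, rule refl)
    also have "\<dots> = F one (ba (\<lambda>p q k. eps p * q k) R)"
    proof -
      have lg: "lin (\<lambda>w. F one w)" by (intro FR lin_id)
      show ?thesis by (subst ba_lin_out[OF lg]) (simp add: lin_scale[OF lg])
    qed
    also have "\<dots> = ba F (tone H)" by (simp add: z1 ba_tone[OF F])
    finally show "ba F (tmul H r1 R) = ba F (tone H)" .
  qed
  then have "r1 = tmul H r1 (tmul H R r)" by (simp add: Rr tmul_oneR)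
  also have "\<dots> = r" by (simp add: tmul_assoc[symmetric] \<open>tmul H r1 R = tone H\<close> tmul_oneL)
  finally show ?thesis unfolding r1_def .
qed

definition sig where "sig = inv S"
lemma S_sig[simp]: "S (sig x) = x" unfolding sig_def using Sbij by (simp add: bij_def surj_f_inv_f)
lemma sig_S[simp]: "sig (S x) = x" unfolding sig_def using Sbij by (simp add: bij_def inv_f_f)
lemma S_inj: "S x = S y \<Longrightarrow> x = y" using Sbij by (simp add: bij_def inj_eq)
lemma lin_sig: "lin sig"
proof (rule linI)
  fix x y
  show "sig (\<lambda>k. x k + y k) = (\<lambda>k. sig x k + sig y k)"
    by (rule S_inj) (simp add: lin_add[OF lin_S, of "sig x" "sig y"])
next
  fix c x
  show "sig (\<lambda>k. c * x k) = (\<lambda>k. c * sig x k)"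
    by (rule S_inj) (simp add: lin_scale[OF lin_S, of c "sig x"])
qed
lemma lin_sigI: "lin f \<Longrightarrow> lin (\<lambda>x. sig (f x))" by (rule lin_comp[OF lin_sig])
lemma sig_antimult: "sig (m a b) = m (sig b) (sig a)"
  by (rule S_inj) (simp add: S_antimult)
lemma sig_one: "sig one = one"
  by (rule S_inj) (simp add: S_one)

lemma antipR_sig_gen:
  assumes "lin G" shows "ba (\<lambda>p q. G (m q (sig p))) (D x) = (\<lambda>k. eps x * G one k)"
proof -
  have "ba (\<lambda>p q. m q (sig p)) (D x) = ba (\<lambda>p q. sig (m p (S q))) (D x)"
    by (simp add: sig_antimult)
  also have "\<dots> = sig (ba (\<lambda>p q. m p (S q)) (D x))" by (rule ba_lin_out[OF lin_sig, symmetric])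
  also have "\<dots> = (\<lambda>k. eps x * one k)" by (simp add: antipR lin_scale[OF lin_sig] sig_one)
  finally have e: "ba (\<lambda>p q. m q (sig p)) (D x) = (\<lambda>k. eps x * one k)" .
  have "ba (\<lambda>p q. G (m q (sig p))) (D x) = G (ba (\<lambda>p q. m q (sig p)) (D x))" by (rule ba_lin_out[OF assms, symmetric])
  also have "\<dots> = (\<lambda>k. eps x * G one k)" by (simp only: e lin_scale[OF assms])
  finally show ?thesis .
qed

lemma mp_sigR: "mp (\<lambda>x. x) sig R = r"
proof -
  define r2 where "r2 = mp (\<lambda>x. x) sig R"
  have "tmul H R r2 = tone H"
  proof (rule ba_ext)
    fix F :: "('i \<Rightarrow> 'k) \<Rightarrow> ('i \<Rightarrow> 'k) \<Rightarrow> 'i \<Rightarrow> 'k" assume F: "bilin F"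
    note FL = bilin_linL[OF F] and FR = bilin_linR[OF F]
    have "ba F (tmul H R r2) = ba (\<lambda>p q. ba (\<lambda>p' q'. F (m p p') (m q q')) r2) R"
      by (rule ba_tmul[OF F])
    also have "\<dots> = ba (\<lambda>p q. ba (\<lambda>p' q'. F (m p p') (m q (sig q'))) R) R"
    proof -
      have "bilin (\<lambda>p' q'. F (m p p') (m q q'))" for p q by (intro bilinI lin_intros FL FR)
      then show ?thesis unfolding r2_def by (simp add: ba_mp lin_sig lin_id)
    qed
    also have "\<dots> = ba (\<lambda>p q. ba (\<lambda>x y. F p (m y (sig x))) (D q)) R"
      by (rule QT_Delta2[symmetric]) (intro trilI lin_intros FL FR lin_sigI)
    also have "\<dots> = ba (\<lambda>p q k. eps q * F p one k) R"
      by (subst antipR_sig_gen) (intro lin_intros FR, rule refl)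
    also have "\<dots> = F (ba (\<lambda>p q k. eps q * p k) R) one"
    proof -
      have lg: "lin (\<lambda>w. F w one)" by (intro FL lin_id)
      show ?thesis by (subst ba_lin_out[OF lg]) (simp add: lin_scale[OF lg])
    qed
    also have "\<dots> = ba F (tone H)" by (simp add: z2 ba_tone[OF F])
    finally show "ba F (tmul H R r2) = ba F (tone H)" .
  qed
  then have "r2 = tmul H (tmul H r R) r2" by (simp add: rR tmul_oneL)
  also have "\<dots> = r" by (simp add: tmul_assoc \<open>tmul H R r2 = tone H\<close> tmul_oneR)
  finally show ?thesis unfolding r2_def .
qed


lemma mp_comp:
  fixes f g f' g' :: "('i \<Rightarrow> 'k) \<Rightarrow> ('i \<Rightarrow> 'k)" and X :: "'i \<Rightarrow> 'i \<Rightarrow> 'k"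
  assumes "lin f" "lin g" "lin f'" "lin g'"
  shows "mp f g (mp f' g' X) = mp (\<lambda>x. f (f' x)) (\<lambda>x. g (g' x)) X"
proof (rule ba_ext)
  fix F :: "('i \<Rightarrow> 'k) \<Rightarrow> ('i \<Rightarrow> 'k) \<Rightarrow> 'i \<Rightarrow> 'k" assume F: "bilin F"
  note FL = bilin_linL[OF F] and FR = bilin_linR[OF F]
  have b1: "bilin (\<lambda>p q. F (f p) (g q))" by (intro bilinI FL FR assms)
  have l1: "lin (\<lambda>x. f (f' x))" "lin (\<lambda>x. g (g' x))" using assms by (auto intro: lin_comp)
  show "ba F (mp f g (mp f' g' X)) = ba F (mp (\<lambda>x. f (f' x)) (\<lambda>x. g (g' x)) X)"
    by (simp add: ba_mp F b1 assms l1)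
qed

lemma mp_id: fixes X :: "'i \<Rightarrow> 'i \<Rightarrow> 'k" shows "mp (\<lambda>x. x) (\<lambda>x. x) X = X"
proof (rule ba_ext)
  fix F :: "('i \<Rightarrow> 'k) \<Rightarrow> ('i \<Rightarrow> 'k) \<Rightarrow> 'i \<Rightarrow> 'k" assume F: "bilin F"
  show "ba F (mp (\<lambda>x. x) (\<lambda>x. x) X) = ba F X" by (simp add: ba_mp F lin_id)
qed

lemma mp_antimult: "mp S S (tmul H X Y) = tmul H (mp S S Y) (mp S S X)"
proof (rule ba_ext)
  fix F :: "('i \<Rightarrow> 'k) \<Rightarrow> ('i \<Rightarrow> 'k) \<Rightarrow> 'i \<Rightarrow> 'k" assume F: "bilin F"
  note FL = bilin_linL[OF F] and FR = bilin_linR[OF F]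
  have b1: "bilin (\<lambda>p q. F (S p) (S q))" by (intro bilinI FL FR lin_intros)
  have b2: "bilin (\<lambda>p q. ba (\<lambda>p' q'. F (m p p') (m q q')) (mp S S X))" by (intro bilinI FL FR lin_intros)
  have b3: "bilin (\<lambda>p' q'. F (m p p') (m q q'))" for p q by (intro bilinI FL FR lin_intros)
  have b4: "bilin (\<lambda>p q. ba (\<lambda>p' q'. F (m p (S p')) (m q (S q'))) X)" by (intro bilinI FL FR lin_intros)
  have "ba F (mp S S (tmul H X Y)) = ba (\<lambda>p q. ba (\<lambda>p' q'. F (S (m p p')) (S (m q q'))) Y) X"
    by (simp add: ba_mp F b1 lin_S ba_tmul)
  also have "\<dots> = ba (\<lambda>p' q'. ba (\<lambda>p q. F (m (S p') (S p)) (m (S q') (S q))) X) Y"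
    by (subst ba_swap) (simp add: S_antimult)
  also have "\<dots> = ba F (tmul H (mp S S Y) (mp S S X))"
    by (simp add: ba_tmul F ba_mp b2 b3 b4 lin_S)
  finally show "ba F (mp S S (tmul H X Y)) = ba F (tmul H (mp S S Y) (mp S S X))" .
qed

lemma mp_SS_tone: "mp S S (tone H) = tone H"
proof (rule ba_ext)
  fix F :: "('i \<Rightarrow> 'k) \<Rightarrow> ('i \<Rightarrow> 'k) \<Rightarrow> 'i \<Rightarrow> 'k" assume F: "bilin F"
  note FL = bilin_linL[OF F] and FR = bilin_linR[OF F]
  have b1: "bilin (\<lambda>p q. F (S p) (S q))" by (intro bilinI FL FR lin_intros)
  show "ba F (mp S S (tone H)) = ba F (tone H)"
    by (simp add: ba_mp F b1 lin_S ba_tone S_one)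
qed

lemma mp_SS_R: "mp S S R = R"
proof -
  have "mp S S R = mp (\<lambda>x. x) S (mp S (\<lambda>x. x) R)"
    by (simp add: mp_comp lin_S lin_id)
  also have "\<dots> = mp (\<lambda>x. x) S (mp (\<lambda>x. x) sig R)" by (simp add: mp_SR mp_sigR)
  also have "\<dots> = R" by (simp add: mp_comp lin_S lin_id lin_sig mp_id)
  finally show ?thesis .
qed

lemma mp_SS_r: "mp S S r = r"
proof -
  have e: "tmul H (mp S S r) R = tone H"
  proof -
    have "tmul H (mp S S r) R = tmul H (mp S S r) (mp S S R)" by (simp add: mp_SS_R)
    also have "\<dots> = mp S S (tmul H R r)" by (simp add: mp_antimult)
    finally show ?thesis by (simp add: Rr mp_SS_tone)
  qed
  have "mp S S r = tmul H (mp S S r) (tmul H R r)" by (simp add: Rr tmul_oneR)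
  also have "\<dots> = r" by (simp add: tmul_assoc[symmetric] e tmul_oneL)
  finally show ?thesis .
qed


definition u where "u = ba (\<lambda>p q. m (S q) p) R"

lemma u_drinfeld: "drinfeld H R = u" unfolding u_def drinfeld_def ..

lemma U1: "m u y = m (S (S y)) u"
proof -
  define E where "E = tri (\<lambda>y1 y2 y3. m (S (S y3)) (ba (\<lambda>r1 r2. m (S (m r2 y2)) (m r1 y1)) R)) (Delta_id H (D y))"
  have inner1: "ba (\<lambda>r1 r2. m (S (m r2 y2)) (m r1 p)) R = m (S y2) (m u p)" for y2 p
  proof -
    have lg: "lin (\<lambda>w. m (S y2) (m w p))" by (intro lin_intros)
    have "ba (\<lambda>r1 r2. m (S (m r2 y2)) (m r1 p)) R = ba (\<lambda>r1 r2. m (S y2) (m (m (S r2) r1) p)) R"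
      by (simp add: S_antimult assoc)
    also have "\<dots> = m (S y2) (m u p)" unfolding u_def by (rule ba_lin_out[OF lg, symmetric])
    finally show ?thesis .
  qed
  have "E = ba (\<lambda>p q. ba (\<lambda>y2 y3. m (S (S y3)) (ba (\<lambda>r1 r2. m (S (m r2 y2)) (m r1 p)) R)) (D q)) (D y)"
    unfolding E_def coassoc tri_id_Delta ..
  also have "\<dots> = ba (\<lambda>p q. ba (\<lambda>y2 y3. m (S (m y2 (S y3))) (m u p)) (D q)) (D y)"
    by (simp only: inner1) (simp add: S_antimult assoc)
  also have "\<dots> = ba (\<lambda>p q k. eps q * m u p k) (D y)"
    by (subst antipR_gen[of "\<lambda>w. m (S w) (m u _)"]) (intro lin_intros, simp add: S_one)
  also have "\<dots> = m u y"
    by (rule counitR_gen) (intro lin_intros)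
  finally have E1: "E = m u y" .
  define F0 where "F0 = (\<lambda>(a::'i\<Rightarrow>'k) b. m (S b) a)"
  have bF0: "bilin F0" unfolding F0_def by (intro bilinI lin_intros)
  note F0L = bilin_linL[OF bF0] and F0R = bilin_linR[OF bF0]
  have inner2: "ba (\<lambda>y1 y2. ba (\<lambda>r1 r2. F0 (m r1 y1) (m r2 y2)) R) (D p) = (\<lambda>k. eps p * u k)" for p
  proof -
    have "ba (\<lambda>y1 y2. ba (\<lambda>r1 r2. F0 (m r1 y1) (m r2 y2)) R) (D p) = ba (\<lambda>r1 r2. ba (\<lambda>y1 y2. F0 (m r1 y1) (m r2 y2)) (D p)) R"
      by (rule ba_swap)
    also have "\<dots> = ba F0 (tmul H R (D p))" by (rule ba_tmul[OF bF0, symmetric])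
    also have "\<dots> = ba F0 (tmul H (tau (D p)) R)" by (simp only: quasi)
    also have "\<dots> = ba (\<lambda>a b. ba (\<lambda>r1 r2. F0 (m a r1) (m b r2)) R) (tau (D p))" by (rule ba_tmul[OF bF0])
    also have "\<dots> = ba (\<lambda>a b. ba (\<lambda>r1 r2. F0 (m b r1) (m a r2)) R) (D p)" by (rule ba_tau)
    also have "\<dots> = ba (\<lambda>a b. ba (\<lambda>r1 r2. m (S r2) (m (m (S a) b) r1)) R) (D p)"
      by (simp add: F0_def S_antimult assoc)
    also have "\<dots> = (\<lambda>k. eps p * ba (\<lambda>r1 r2. m (S r2) (m one r1)) R k)"
      by (rule antipL_gen[of "\<lambda>w. ba (\<lambda>r1 r2. m (S r2) (m w r1)) R"]) (intro lin_intros)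
    finally show ?thesis by (simp add: u_def)
  qed
  have "E = ba (\<lambda>p y3. ba (\<lambda>y1 y2. m (S (S y3)) (ba (\<lambda>r1 r2. F0 (m r1 y1) (m r2 y2)) R)) (D p)) (D y)"
    unfolding E_def tri_Delta_id F0_def ..
  also have "\<dots> = ba (\<lambda>p y3. m (S (S y3)) (ba (\<lambda>y1 y2. ba (\<lambda>r1 r2. F0 (m r1 y1) (m r2 y2)) R) (D p))) (D y)"
  proof -
    have "ba (\<lambda>y1 y2. m (S (S y3)) (ba (\<lambda>r1 r2. F0 (m r1 y1) (m r2 y2)) R)) (D p) =
          m (S (S y3)) (ba (\<lambda>y1 y2. ba (\<lambda>r1 r2. F0 (m r1 y1) (m r2 y2)) R) (D p))" for p y3
      by (rule ba_lin_out[symmetric]) (intro lin_intros)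
    then show ?thesis by simp
  qed
  also have "\<dots> = ba (\<lambda>p y3 k. eps p * m (S (S y3)) u k) (D y)"
  proof -
    have lg: "lin (m (S (S y3)))" for y3 using lin_vmulR[OF lin_id, of H "S (S y3)"] by simp
    show ?thesis by (simp add: inner2 lin_scale[OF lg])
  qed
  also have "\<dots> = m (S (S y)) u"
    by (rule counitL_gen[of "\<lambda>y3. m (S (S y3)) u"]) (intro lin_intros)
  finally show ?thesis using E1 by simp
qed


definition w where "w = ba (\<lambda>p q. m (S (S p)) q) R"

lemma w_r: "w = ba (\<lambda>p q. m (S p) q) r"
proof -
  have b: "bilin (\<lambda>p q. m (S p) q)" by (intro bilinI lin_intros)
  show ?thesis unfolding w_def mp_SR[symmetric] by (simp add: ba_mp[OF b] lin_S lin_id)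
qed

lemma Sw: "S w = ba (\<lambda>p q. m (S q) (S (S p))) r"
  unfolding w_r by (subst ba_lin_out[OF lin_S]) (simp add: S_antimult)

lemma ba_rSS: assumes "bilin G" shows "ba (\<lambda>p q. G (S p) (S q)) r = ba G r"
  using ba_mp[OF assms lin_S lin_S, of r] mp_SS_r by simp

lemma ba_rSS2: assumes G: "bilin G" shows "ba (\<lambda>p q. G (S (S p)) (S (S q))) r = ba G r"
proof -
  have b: "bilin (\<lambda>a b. G (S a) (S b))"
    by (intro bilinI bilin_linL[OF G] bilin_linR[OF G] lin_intros)
  have "ba (\<lambda>p q. G (S (S p)) (S (S q))) r = ba (\<lambda>a b. G (S a) (S b)) r"
    using ba_rSS[OF b] by simp
  also have "\<dots> = ba G r" by (rule ba_rSS[OF G])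
  finally show ?thesis .
qed

lemma F0_bilin: "bilin (\<lambda>a b. m (S b) a)" by (intro bilinI lin_intros)

lemma U2a: "m (S w) u = one"
proof -
  have "m (S w) u = ba (\<lambda>p q. m (m (S q) (S (S p))) u) r"
    unfolding Sw by (rule ba_lin_out) (intro lin_intros)
  also have "\<dots> = ba (\<lambda>p q. m (S q) (m u p)) r"
    by (simp add: assoc U1)
  also have "\<dots> = ba (\<lambda>p q. ba (\<lambda>p' q'. m (S q) (m (S q') (m p' p))) R) r"
  proof -
    have "m (S q) (m u p) = ba (\<lambda>p' q'. m (S q) (m (S q') (m p' p))) R" for p q
    proof -
      have "m (S q) (m u p) = ba (\<lambda>p' q'. m (S q) (m (m (S q') p') p)) R"
        unfolding u_def by (rule ba_lin_out) (intro lin_intros)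
      then show ?thesis by (simp add: assoc)
    qed
    then show ?thesis by simp
  qed
  also have "\<dots> = ba (\<lambda>p' q'. ba (\<lambda>p q. (\<lambda>a b. m (S b) a) (m p' p) (m q' q)) r) R"
    by (subst ba_swap) (simp add: S_antimult assoc)
  also have "\<dots> = one" by (subst ba_Rr[OF F0_bilin]) (simp add: S_one)
  finally show ?thesis .
qed

lemma U2b: "m u (S w) = one"
proof -
  have "m u (S w) = ba (\<lambda>p q. m u (m (S q) (S (S p)))) r"
    unfolding Sw by (rule ba_lin_out) (intro lin_intros)
  also have "\<dots> = ba (\<lambda>p q. m (S (S (S q))) (m u (S (S p)))) r"
  proof -
    have e: "m u (m (S q) Z) = m (S (S (S q))) (m u Z)" for q Z
      by (simp only: assoc[symmetric] U1[of "S q"])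
    show ?thesis by (simp only: e)
  qed
  also have "\<dots> = ba (\<lambda>p q. ba (\<lambda>p' q'. m (S (S (S q))) (m (S q') (m p' (S (S p))))) R) r"
  proof -
    have "m (S (S (S q))) (m u (S (S p))) = ba (\<lambda>p' q'. m (S (S (S q))) (m (S q') (m p' (S (S p))))) R" for p q
    proof -
      have "m (S (S (S q))) (m u (S (S p))) = ba (\<lambda>p' q'. m (S (S (S q))) (m (m (S q') p') (S (S p)))) R"
        unfolding u_def by (rule ba_lin_out) (intro lin_intros)
      then show ?thesis by (simp add: assoc)
    qed
    then show ?thesis by simp
  qed
  also have "\<dots> = ba (\<lambda>p' q'. ba (\<lambda>p q. (\<lambda>a b. m (S b) (m (S q') (m p' a))) (S (S p)) (S (S q))) r) R"
    by (subst ba_swap) (rule refl)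
  also have "\<dots> = ba (\<lambda>p' q'. ba (\<lambda>p q. m (S q) (m (S q') (m p' p))) r) R"
  proof -
    have "ba (\<lambda>p q. m (S (S (S q))) (m (S q') (m p' (S (S p))))) r = ba (\<lambda>p q. m (S q) (m (S q') (m p' p))) r" for p' q'
      using ba_rSS2[of "\<lambda>a b. m (S b) (m (S q') (m p' a))"] by (simp add: bilinI lin_intros)
    then show ?thesis by simp
  qed
  also have "\<dots> = ba (\<lambda>p' q'. ba (\<lambda>p q. (\<lambda>a b. m (S b) a) (m p' p) (m q' q)) r) R"
    by (simp add: S_antimult assoc)
  also have "\<dots> = one" by (subst ba_Rr[OF F0_bilin]) (simp add: S_one)
  finally show ?thesis .
qed

end



locale ribL = qtL H R for H :: "('k::field, 'i::finite) hopf" and R +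
  fixes v :: "'i \<Rightarrow> 'k"
  assumes rib: "ribbon H R v"
begin

lemma v_central: "m v x = m x v" using rib unfolding ribbon_def by blast
lemma Sv: "S v = v" using rib unfolding ribbon_def by blast
lemma Dv: "D v = tmul H (tens v v) (monodromy H R)" using rib unfolding ribbon_def by blast
lemma ck: "m (m v v) (m u (S u)) = one" "m (m u (S u)) (m v v) = one"
proof -
  have "m (m v v) (m (drinfeld H R) (S (drinfeld H R))) = one \<and> m (m (drinfeld H R) (S (drinfeld H R))) (m v v) = one"
    using rib unfolding ribbon_def Let_def by blast
  then show "m (m v v) (m u (S u)) = one" "m (m u (S u)) (m v v) = one" unfolding u_drinfeld by blast+
qed

definition c where "c = m v v"
definition k0 where "k0 = m u (S u)"

lemma c_central: "m c x = m x c"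
proof -
  have "m c x = m v (m v x)" unfolding c_def by (simp only: assoc)
  also have "\<dots> = m v (m x v)" by (simp only: v_central[of x])
  also have "\<dots> = m (m v x) v" by (simp only: assoc)
  also have "\<dots> = m (m x v) v" by (simp only: v_central[of x])
  also have "\<dots> = m x c" unfolding c_def by (simp only: assoc)
  finally show ?thesis .
qed

lemma ck0: "m c k0 = one" "m k0 c = one" using ck unfolding c_def k0_def by blast+

lemma k0_central: "m k0 x = m x k0"
proof -
  have "m k0 x = m k0 (m x (m c k0))" by (simp add: ck0)
  also have "\<dots> = m k0 (m (m c x) k0)" by (simp add: c_central assoc)
  also have "\<dots> = m (m k0 c) (m x k0)" by (simp add: assoc)
  also have "\<dots> = m x k0" by (simp add: ck0)
  finally show ?thesis .
qed

lemma Su_u: "m (S u) u = m u (S u)"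
proof -
  have "m u (m (S u) u) = m u (m u (S u))"
    using k0_central[of u] unfolding k0_def by (simp add: assoc)
  then have "m (S w) (m u (m (S u) u)) = m (S w) (m u (m u (S u)))" by simp
  then show ?thesis by (simp add: assoc[symmetric] U2a)
qed

lemma Su_w: "m (S u) w = one"
proof -
  have e1: "m (S u) (S (S w)) = one"
    using arg_cong[OF U2a, of S] by (simp add: S_antimult S_one)
  have e2: "S (S w) = m u (m w (S w))"
  proof -
    have "S (S w) = m (S (S w)) (m u (S w))" by (simp add: U2b)
    also have "\<dots> = m (m (S (S w)) u) (S w)" by (simp only: assoc)
    also have "\<dots> = m u (m w (S w))" by (simp only: U1[of w, symmetric] assoc)
    finally show ?thesis .
  qed
  have "m u (m (S u) (m w (S w))) = one"
    using e1 unfolding e2 by (simp add: assoc[symmetric] Su_u)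
  then have "m (S w) (m u (m (S u) (m w (S w)))) = S w" by simp
  then have "m (S u) (m w (S w)) = S w" by (simp add: assoc[symmetric] U2a)
  then have "m (m (S u) (m w (S w))) u = m (S w) u" by simp
  then show ?thesis by (simp add: assoc U2a)
qed

lemma Sw_w: "m (S w) w = c"
proof -
  have k: "m k0 (m (S w) w) = one"
  proof -
    have "m k0 (m (S w) w) = m (S u) (m (m u (S w)) w)"
      unfolding k0_def Su_u[symmetric] by (simp add: assoc)
    also have "\<dots> = one" by (simp add: U2b Su_w)
    finally show ?thesis .
  qed
  have "c = m c (m k0 (m (S w) w))" by (simp add: k)
  also have "\<dots> = m (S w) w" by (simp add: assoc[symmetric] ck0)
  finally show ?thesis by simp
qed

lemma W1: "m (S w) (S (S y)) = m y (S w)"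
proof -
  have "m (S w) (S (S y)) = m (S w) (m (S (S y)) (m u (S w)))" by (simp add: U2b)
  also have "\<dots> = m (m (S w) (m u y)) (S w)" by (simp add: assoc U1)
  also have "\<dots> = m y (S w)" by (simp add: assoc[symmetric] U2a)
  finally show ?thesis .
qed


lemma T1: "tS H R a = ba (\<lambda>p q. m (S p) (m (S a) (m w q))) R"
proof -
  have inner: "m (S (ba (\<lambda>x y. m (m (S x) a) y) (D p))) q = ba (\<lambda>x y. m (S y) (m (S a) (m (S (S x)) q))) (D p)" for p q
  proof -
    have "m (S (ba (\<lambda>x y. m (m (S x) a) y) (D p))) q = ba (\<lambda>x y. m (S (m (m (S x) a) y)) q) (D p)"
      by (subst ba_lin_out[OF lin_S], subst ba_lin_out) (intro lin_intros, rule refl)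
    also have "\<dots> = ba (\<lambda>x y. m (S y) (m (S a) (m (S (S x)) q))) (D p)"
      by (simp add: S_antimult assoc)
    finally show ?thesis .
  qed
  have inner': "m (S (ba (\<lambda>x y. m (m (S x) a) y) (D p))) = (\<lambda>q. ba (\<lambda>x y. m (S y) (m (S a) (m (S (S x)) q))) (D p))" for p
    by (rule ext) (rule inner)
  have "tS H R a = ba (\<lambda>p q. ba (\<lambda>x y. m (S y) (m (S a) (m (S (S x)) q))) (D p)) R"
    unfolding tS_def by (simp only: inner')
  also have "\<dots> = ba (\<lambda>p q. ba (\<lambda>p' q'. m (S p') (m (S a) (m (S (S p)) (m q q')))) R) R"
    by (rule QT_Delta1) (intro trilI lin_intros)
  also have "\<dots> = ba (\<lambda>p' q'. ba (\<lambda>p q. m (S p') (m (S a) (m (m (S (S p)) q) q'))) R) R"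
    by (subst ba_swap) (simp add: assoc)
  also have "\<dots> = ba (\<lambda>p q. m (S p) (m (S a) (m w q))) R"
  proof -
    have "ba (\<lambda>p q. m (S p') (m (S a) (m (m (S (S p)) q) q'))) R = m (S p') (m (S a) (m w q'))" for p' q'
      unfolding w_def by (rule ba_lin_out[symmetric]) (intro lin_intros)
    then show ?thesis by simp
  qed
  finally show ?thesis .
qed

lemma main: "tS H R (tS H R a) = ba (\<lambda>x y. m (m (S x) a) y) (D v)"
proof -
  have S_tS: "S (tS H R a) = ba (\<lambda>p q. m (S q) (m a (m p (S w)))) R"
  proof -
    have "S (tS H R a) = ba (\<lambda>p q. S (m (S p) (m (S a) (m w q)))) R"
      unfolding T1 by (rule ba_lin_out[OF lin_S])
    also have "\<dots> = ba (\<lambda>p q. m (S q) (m (S w) (S (S (m a p))))) R"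
      by (simp add: S_antimult assoc)
    also have "\<dots> = ba (\<lambda>p q. m (S q) (m a (m p (S w)))) R"
      by (simp only: W1 assoc)
    finally show ?thesis .
  qed
  have "tS H R (tS H R a) = ba (\<lambda>p0 q0. m (S p0) (m (ba (\<lambda>p q. m (S q) (m a (m p (S w)))) R) (m w q0))) R"
    unfolding T1[of "tS H R a"] S_tS by (simp add: assoc)
  also have "\<dots> = ba (\<lambda>p0 q0. ba (\<lambda>p q. m (S p0) (m (S q) (m a (m p (m (m (S w) w) q0))))) R) R"
  proof -
    have "m (S p0) (m (ba (\<lambda>p q. m (S q) (m a (m p (S w)))) R) (m w q0)) = ba (\<lambda>p q. m (S p0) (m (S q) (m a (m p (m (m (S w) w) q0))))) R" for p0 q0
    proof -
      have "m (S p0) (m (ba (\<lambda>p q. m (S q) (m a (m p (S w)))) R) (m w q0)) = ba (\<lambda>p q. m (S p0) (m (m (S q) (m a (m p (S w)))) (m w q0))) R"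
        by (rule ba_lin_out) (intro lin_intros)
      then show ?thesis by (simp add: assoc)
    qed
    then show ?thesis by simp
  qed
  also have "\<dots> = ba (\<lambda>p0 q0. ba (\<lambda>p q. m (S p0) (m (S q) (m a (m p (m q0 c))))) R) R"
    by (simp only: Sw_w c_central)
  finally have L: "tS H R (tS H R a) = ba (\<lambda>p0 q0. ba (\<lambda>p q. m (S p0) (m (S q) (m a (m p (m q0 c))))) R) R" .
  define F where "F = (\<lambda>x y. m (m (S x) a) y)"
  have bF: "bilin F" unfolding F_def by (intro bilinI lin_intros)
  define G where "G = (\<lambda>x y. m (S x) (m a (m y c)))"
  have bG: "bilin G" unfolding G_def by (intro bilinI lin_intros)
  have "ba F (D v) = ba (\<lambda>p q. ba (\<lambda>p' q'. F (m p p') (m q q')) (monodromy H R)) (tens v v)"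
    unfolding Dv by (rule ba_tmul[OF bF])
  also have "\<dots> = ba (\<lambda>p' q'. F (m v p') (m v q')) (monodromy H R)"
    by (rule ba_tens) (unfold F_def, intro bilinI lin_intros)
  also have "\<dots> = ba G (monodromy H R)"
  proof -
    have "F (m v p') (m v q') = G p' q'" for p' q'
    proof -
      have "F (m v p') (m v q') = m (S p') (m v (m a (m v q')))" unfolding F_def by (simp add: S_antimult Sv assoc)
      also have "\<dots> = m (S p') (m (m v a) (m v q'))" by (simp only: assoc)
      also have "\<dots> = m (S p') (m (m a v) (m v q'))" by (simp only: v_central[of a])
      also have "\<dots> = m (S p') (m a (m (m v v) q'))" by (simp only: assoc)
      also have "\<dots> = G p' q'" unfolding G_def c_def[symmetric] by (simp only: c_central)
      finally show ?thesis .
    qed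
    then show ?thesis by simp
  qed
  also have "\<dots> = ba (\<lambda>p q. ba (\<lambda>p' q'. G (m p p') (m q q')) R) (tau R)"
    unfolding monodromy_def by (rule ba_tmul[OF bG])
  also have "\<dots> = ba (\<lambda>p q. ba (\<lambda>p' q'. G (m q p') (m p q')) R) R"
    by (rule ba_tau)
  also have "\<dots> = ba (\<lambda>p' q'. ba (\<lambda>p q. G (m q p') (m p q')) R) R"
    by (rule ba_swap)
  also have "\<dots> = ba (\<lambda>p0 q0. ba (\<lambda>p q. m (S p0) (m (S q) (m a (m p (m q0 c))))) R) R"
    unfolding G_def by (simp add: S_antimult assoc)
  finally show ?thesis using L unfolding F_def by simp
qed

end

theorem mainTheorem6:
  fixes H :: "('k::field, 'i::finite) hopf"
    and R :: "'i \<Rightarrow> 'i \<Rightarrow> 'k"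
    and v :: "'i \<Rightarrow> 'k"
    and a :: "'i \<Rightarrow> 'k"
  assumes "is_hopf H"
    and "bij (vS H)"
    and "quasitriangular H R"
    and "ribbon H R v"
    and "factorizable H R"
  shows "tS H R (tS H R a) = bilin_apply (\<lambda>x y. vmul H (vmul H (vS H x) a) y) (vDelta H v)"
proof -
  interpret ribL H R v
    by unfold_locales (use assms in auto)
  show ?thesis by (rule main)
qed

end
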